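(* Let $(\Lambda,d)$ be a finitely aligned $k$-graph and let $(\overline{\Lambda},\overline d)$ be its extension as described in the context. If $\{t_\lambda:\lambda\in\overline{\Lambda}\}$ is a Cuntz–Krieger $\overline{\Lambda}$-family, then $\{t_\lambda:\lambda\in\Lambda\}$ is a Cuntz–Krieger $\Lambda$-family.
   Context: A $k$-graph $(\Lambda,d)$ is a countable category with a degree functor $d:\Lambda\to\mathbb{N}^k$ satisfying unique factorization; $\Lambda^0$ vertices (identity morphisms), $r,s$ range/source, $v\Gamma=\{\lambda\in\Gamma:r(\lambda)=v\}$; $e_i$ standard basis, $\le$ coordinatewise, $\vee,\wedge$ coordinatewise max/min. For a $k$-graph $\Gamma$, $\Gamma^{\min}(\lambda,\mu)=\{(\alpha,\beta):\lambda\alpha=\mu\beta,\ d(\lambda\alpha)=d(\lambda)\vee d(\mu)\}$; $\Gamma$ is finitely aligned if these are finite; $E\subseteq v\Gamma$ is exhaustive if every $\mu\in v\Gamma$ has some $\lambda\in E$ with $\Gamma^{\min}(\lambda,\mu)\ne\emptyset$; $v\mathcal{FE}(\Gamma)$ is the set of finite exhaustive subsets of $v\Gamma$. For finitely aligned $\Gamma$, a Cuntz–Krieger $\Gamma$-family in a $C^*$-algebra is a family of partial isometries $\{t_\lambda:\lambda\in\Gamma\}$ with (TCK1) $\{t_v:v\in\Gamma^0\}$ mutually orthogonal projections; (TCK2) $t_{\lambda\mu}=t_\lambda t_\mu$ when $s(\lambda)=r(\mu)$; (TCK3) $t_\lambda^*t_\mu=\sum_{(\alpha,\beta)\in\Gamma^{\min}(\lambda,\mu)}t_\alpha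 t_\beta^*$; (CK) $\prod_{\lambda\in E}(t_v-t_\lambda t_\lambda^* )=0$ for all $v\in\Gamma^0$, $E\in v\mathcal{FE}(\Gamma)$. Extension: for $m\in(\mathbb{N}\cup\{\infty\})^k$, $\Omega_{k,m}$ has objects $\{p\in\mathbb{N}^k:p\le m\}$, morphisms $(p,q)$, $p\le q\le m$, $r(p,q)=p$, $s(p,q)=q$, $d(p,q)=q-p$. A graph morphism $x:\Omega_{k,m}\to\Lambda$ is a degree-preserving functor; $d(x)=m$, $x(a,b)=x((a,b))$, $x(a)=x(a,a)$; it is a boundary path if there is $n_x\in\mathbb{N}^k$, $n_x\le d(x)$, with $x(p)\Lambda^{e_i}=\emptyset$ whenever $p\in\mathbb{N}^k$, $n_x\le p\le d(x)$, $p_i=d(x)_i$; $\Lambda^{\le\infty}$ is the set of boundary paths. $\sigma^px(a,b)=x(a+p,b+p)$; $\lambda x$ is the concatenation. $V_\Lambda=\{(x;m):x\in\Lambda^{\le\infty},m\in\mathbb{N}^k,m\not\le d(x)\}$, $(x;m)\approx(y;p)$ iff $x(m\wedge d(x))=y(p\wedge d(y))$ and $m-m\wedge d(x)=p-p\wedge d(y)$; classes $[x;m]$ form $\widetilde{V_\Lambda}$. $P_\Lambda=\{(x;(m,n)):x\in\Lambda^{\le\infty},m\le n\in\mathbb{N}^k,n\not\le d(x)\}$, $(x;(m,n))\sim(y;(p,q))$ iff $x(m\wedge d(x),n\wedge d(x))=y(p\wedge d(y),q\wedge d(y))$, $m-m\wedge d(x)=p-p\wedge d(y)$, $n-m=q-p$;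 classes $[x;(m,n)]$ form $\widetilde{P_\Lambda}$. $\overline{\Lambda}$ is the $k$-graph with objects $\Lambda^0\sqcup\widetilde{V_\Lambda}$ and morphisms $\Lambda\sqcup\widetilde{P_\Lambda}$: on $\Lambda$ as in $\Lambda$; $\overline r([x;(m,n)])=x(m)$ if $m\le d(x)$, else $[x;m]$; $\overline s([x;(m,n)])=[x;n]$; identity at $[x;m]$ is $[x;(m,m)]$; $\lambda[x;(m,n)]=[\lambda\sigma^mx;(0,d(\lambda)+n-m)]$; $[x;(m,n)][y;(p,q)]=[z;(m,n+q-p)]$, $z=x(0,n\wedge d(x))\sigma^{p\wedge d(y)}y$; degree $\overline d|_\Lambda=d$, $\overline d([x;(m,n)])=n-m$. When $\Lambda$ is finitely aligned, so is $\overline{\Lambda}$. *)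

theory Defs
  imports Complex_Main "HOL-Library.Extended_Nat" "HOL-Library.Function_Algebras"
    "HOL-Library.Countable_Set"
begin

class cstar_algebra = real_normed_algebra + banach +
  fixes scaleC :: "complex \<Rightarrow> 'a \<Rightarrow> 'a"
    and adj :: "'a \<Rightarrow> 'a"
  assumes scaleC_add_right: "scaleC c (x + y) = scaleC c x + scaleC c y"
    and scaleC_add_left: "scaleC (b + c) x = scaleC b x + scaleC c x"
    and scaleC_scaleC: "scaleC b (scaleC c x) = scaleC (b * c) x"
    and scaleC_one: "scaleC 1 x = x"
    and scaleR_scaleC: "scaleR r x = scaleC (complex_of_real r) x"
    and norm_scaleC: "norm (scaleC c x) = cmod c * norm x"
    and mult_scaleC_left: "scaleC c x * y = scaleC c (x * y)"
    and mult_scaleC_right: "x * scaleC c y = scaleC c (x * y)"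
    and adj_adj: "adj (adj x) = x"
    and adj_add: "adj (x + y) = adj x + adj y"
    and adj_scaleC: "adj (scaleC c x) = scaleC (cnj c) (adj x)"
    and adj_mult: "adj (x * y) = adj y * adj x"
    and cstar_identity: "norm (adj x * x) = norm x * norm x"

text \<open>Degrees live in N^k, represented as functions 'k => nat for a finite index type 'k
  (pointwise order, sup = coordinatewise max, inf = coordinatewise min).
  Objects are identified with their identity morphisms.\<close>

record ('m, 'k) kgraph =
  Mor :: "'m set"
  rng :: "'m \<Rightarrow> 'm"
  src :: "'m \<Rightarrow> 'm"
  cmp :: "'m \<Rightarrow> 'm \<Rightarrow> 'm"
  deg :: "'m \<Rightarrow> 'k \<Rightarrow> nat"

definition verts :: "('m, 'k) kgraph \<Rightarrow> 'm set" where
  "verts G = rng G ` Mor G"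

definition kgraph :: "('m, 'k::finite) kgraph \<Rightarrow> bool" where
  "kgraph G \<longleftrightarrow>
     countable (Mor G) \<and>
     (\<forall>l\<in>Mor G. rng G l \<in> Mor G \<and> src G l \<in> Mor G \<and>
        rng G (rng G l) = rng G l \<and> src G (rng G l) = rng G l \<and>
        rng G (src G l) = src G l \<and> src G (src G l) = src G l \<and>
        cmp G (rng G l) l = l \<and> cmp G l (src G l) = l) \<and>
     (\<forall>l\<in>Mor G. \<forall>u\<in>Mor G. src G l = rng G u \<longrightarrow>
        cmp G l u \<in> Mor G \<and> rng G (cmp G l u) = rng G l \<and> src G (cmp G l u) = src G u \<and>
        deg G (cmp G l u) = deg G l + deg G u) \<and>
     (\<forall>l\<in>Mor G. \<forall>u\<in>Mor G. \<forall>w\<in>Mor G. src G l = rng G u \<longrightarrow> src G u = rng G w \<longrightarrow>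
        cmp G (cmp G l u) w = cmp G l (cmp G u w)) \<and>
     (\<forall>l\<in>Mor G. \<forall>m n. deg G l = m + n \<longrightarrow>
        (\<exists>!p. fst p \<in> Mor G \<and> snd p \<in> Mor G \<and> src G (fst p) = rng G (snd p) \<and>
               deg G (fst p) = m \<and> deg G (snd p) = n \<and> cmp G (fst p) (snd p) = l))"

definition MCE :: "('m, 'k::finite) kgraph \<Rightarrow> 'm \<Rightarrow> 'm \<Rightarrow> ('m \<times> 'm) set" where
  "MCE G l u = {(a, b). a \<in> Mor G \<and> b \<in> Mor G \<and> src G l = rng G a \<and> src G u = rng G b \<and>
      cmp G l a = cmp G u b \<and> deg G (cmp G l a) = sup (deg G l) (deg G u)}"

definition finitely_aligned :: "('m, 'k::finite) kgraph \<Rightarrow> bool" where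
  "finitely_aligned G \<longleftrightarrow> (\<forall>l\<in>Mor G. \<forall>u\<in>Mor G. finite (MCE G l u))"

definition vMor :: "('m, 'k) kgraph \<Rightarrow> 'm \<Rightarrow> 'm set" where
  "vMor G v = {l \<in> Mor G. rng G l = v}"

definition exhaustive :: "('m, 'k::finite) kgraph \<Rightarrow> 'm \<Rightarrow> 'm set \<Rightarrow> bool" where
  "exhaustive G v E \<longleftrightarrow> E \<subseteq> vMor G v \<and> (\<forall>u\<in>vMor G v. \<exists>l\<in>E. MCE G l u \<noteq> {})"

definition vFE :: "('m, 'k::finite) kgraph \<Rightarrow> 'm \<Rightarrow> 'm set set" where
  "vFE G v = {E. finite E \<and> exhaustive G v E}"

text \<open>Product of a nonempty list in a (noncommutative, possibly non-unital) algebra.\<close>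
fun nprod :: "'a::times list \<Rightarrow> 'a" where
  "nprod [] = undefined"
| "nprod [x] = x"
| "nprod (x # y # xs) = x * nprod (y # xs)"

definition partial_isometry :: "'a::cstar_algebra \<Rightarrow> bool" where
  "partial_isometry a \<longleftrightarrow> a * adj a * a = a"

definition CK_family :: "('m, 'k::finite) kgraph \<Rightarrow> ('m \<Rightarrow> 'a::cstar_algebra) \<Rightarrow> bool" where
  "CK_family G t \<longleftrightarrow>
     (\<forall>l\<in>Mor G. partial_isometry (t l)) \<and>
     (\<forall>v\<in>verts G. adj (t v) = t v \<and> t v * t v = t v) \<and>
     (\<forall>v\<in>verts G. \<forall>w\<in>verts G. v \<noteq> w \<longrightarrow> t v * t w = 0) \<and>
     (\<forall>l\<in>Mor G. \<forall>u\<in>Mor G. src G l = rng G u \<longrightarrow> t (cmp G l u) = t l * t u) \<and>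
     (\<forall>l\<in>Mor G. \<forall>u\<in>Mor G. adj (t l) * t u = (\<Sum>(a, b)\<in>MCE G l u. t a * adj (t b))) \<and>
     (\<forall>v\<in>verts G. \<forall>E\<in>vFE G v. \<forall>xs. distinct xs \<and> set xs = E \<longrightarrow>
        nprod (map (\<lambda>l. t v - t l * adj (t l)) xs) = 0)"

type_synonym ('m, 'k) gpath = "('k \<Rightarrow> enat) \<times> (('k \<Rightarrow> nat) \<Rightarrow> ('k \<Rightarrow> nat) \<Rightarrow> 'm)"
type_synonym ('m, 'k) ptriple = "('m, 'k) gpath \<times> ('k \<Rightarrow> nat) \<times> ('k \<Rightarrow> nat)"

definition nle :: "('k \<Rightarrow> nat) \<Rightarrow> ('k \<Rightarrow> enat) \<Rightarrow> bool" where
  "nle p m \<longleftrightarrow> (\<forall>i. enat (p i) \<le> m i)"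

definition nmin :: "('k \<Rightarrow> nat) \<Rightarrow> ('k \<Rightarrow> enat) \<Rightarrow> ('k \<Rightarrow> nat)" where
  "nmin p m = (\<lambda>i. if enat (p i) \<le> m i then p i else the_enat (m i))"

definition basis :: "'k \<Rightarrow> 'k \<Rightarrow> nat" where
  "basis i = (\<lambda>j. if j = i then 1 else 0)"

text \<open>A degree-preserving functor x : Omega_{k,m} -> Lambda, with m = fst x and
  x((p,q)) = snd x p q (undefined outside the morphisms of Omega_{k,m}).\<close>
definition graph_morphism :: "('m, 'k::finite) kgraph \<Rightarrow> ('m, 'k) gpath \<Rightarrow> bool" where
  "graph_morphism G x \<longleftrightarrow>
     (\<forall>p q. \<not> (p \<le> q \<and> nle q (fst x)) \<longrightarrow> snd x p q = undefined) \<and>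
     (\<forall>p q. p \<le> q \<and> nle q (fst x) \<longrightarrow>
        snd x p q \<in> Mor G \<and> deg G (snd x p q) = q - p \<and>
        rng G (snd x p q) = snd x p p \<and> src G (snd x p q) = snd x q q) \<and>
     (\<forall>p. nle p (fst x) \<longrightarrow> snd x p p \<in> verts G) \<and>
     (\<forall>p q r. p \<le> q \<and> q \<le> r \<and> nle r (fst x) \<longrightarrow>
        cmp G (snd x p q) (snd x q r) = snd x p r)"

definition boundary_path :: "('m, 'k::finite) kgraph \<Rightarrow> ('m, 'k) gpath \<Rightarrow> bool" where
  "boundary_path G x \<longleftrightarrow> graph_morphism G x \<and>
     (\<exists>nx. nle nx (fst x) \<and>
        (\<forall>p i. nx \<le> p \<and> nle p (fst x) \<and> enat (p i) = fst x i \<longrightarrow>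
           \<not> (\<exists>l\<in>Mor G. rng G l = snd x p p \<and> deg G l = basis i)))"

definition shift :: "('k \<Rightarrow> nat) \<Rightarrow> ('m, 'k) gpath \<Rightarrow> ('m, 'k) gpath" where
  "shift p x = ((\<lambda>i. fst x i - enat (p i)),
     (\<lambda>a b. if a \<le> b \<and> nle b (\<lambda>i. fst x i - enat (p i)) then snd x (a + p) (b + p) else undefined))"

definition concat :: "('m, 'k::finite) kgraph \<Rightarrow> 'm \<Rightarrow> ('m, 'k) gpath \<Rightarrow> ('m, 'k) gpath" where
  "concat G l y = (THE z. graph_morphism G z \<and> fst z = (\<lambda>i. enat (deg G l i) + fst y i) \<and>
       snd z 0 (deg G l) = l \<and> shift (deg G l) z = y)"

definition Pset :: "('m, 'k::finite) kgraph \<Rightarrow> ('m, 'k) ptriple set" where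
  "Pset G = {(x, m, n). boundary_path G x \<and> m \<le> n \<and> \<not> nle n (fst x)}"

definition prel :: "('m, 'k::finite) kgraph \<Rightarrow> ('m, 'k) ptriple \<Rightarrow> ('m, 'k) ptriple \<Rightarrow> bool" where
  "prel G a b \<longleftrightarrow> a \<in> Pset G \<and> b \<in> Pset G \<and>
     (case a of (x, m, n) \<Rightarrow> case b of (y, p, q) \<Rightarrow>
        snd x (nmin m (fst x)) (nmin n (fst x)) = snd y (nmin p (fst y)) (nmin q (fst y)) \<and>
        m - nmin m (fst x) = p - nmin p (fst y) \<and> n - m = q - p)"

definition pclass :: "('m, 'k::finite) kgraph \<Rightarrow> ('m, 'k) ptriple \<Rightarrow> ('m, 'k) ptriple set" where
  "pclass G a = {b. prel G a b}"

definition Ptil :: "('m, 'k::finite) kgraph \<Rightarrow> ('m, 'k) ptriple set set" where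
  "Ptil G = pclass G ` Pset G"

definition rep :: "'a set \<Rightarrow> 'a" where
  "rep X = (SOME a. a \<in> X)"

text \<open>Morphisms of the extension: Inl lambda for lambda in Lambda, Inr [x;(m,n)].
  The vertex [x;m] of V~ is identified with its identity morphism [x;(m,m)].
  Operations on classes are computed on (arbitrarily chosen) representatives;
  composition of non-composable pairs is left undefined.\<close>
definition ext :: "('m, 'k::finite) kgraph \<Rightarrow> ('m + ('m, 'k) ptriple set, 'k) kgraph" where
  "ext G = \<lparr> Mor = Inl ` Mor G \<union> Inr ` Ptil G,
     rng = (\<lambda>u. case u of Inl l \<Rightarrow> Inl (rng G l)
             | Inr X \<Rightarrow> (case rep X of (x, m, n) \<Rightarrow>
                 if nle m (fst x) then Inl (snd x m m) else Inr (pclass G (x, m, m)))),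
     src = (\<lambda>u. case u of Inl l \<Rightarrow> Inl (src G l)
             | Inr X \<Rightarrow> (case rep X of (x, m, n) \<Rightarrow> Inr (pclass G (x, n, n)))),
     cmp = (\<lambda>u w. case u of
               Inl l \<Rightarrow> (case w of
                   Inl l' \<Rightarrow> Inl (cmp G l l')
                 | Inr Y \<Rightarrow> (case rep Y of (x, m, n) \<Rightarrow>
                     Inr (pclass G (concat G l (shift m x), 0, deg G l + n - m))))
             | Inr X \<Rightarrow> (case w of
                   Inl l' \<Rightarrow> undefined
                 | Inr Y \<Rightarrow> (case rep X of (x, m, n) \<Rightarrow> case rep Y of (y, p, q) \<Rightarrow>
                     Inr (pclass G (concat G (snd x 0 (nmin n (fst x))) (shift (nmin p (fst y)) y),
                                    m, n + q - p))))),
     deg = (\<lambda>u. case u of Inl l \<Rightarrow> deg G l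
             | Inr X \<Rightarrow> (case rep X of (x, m, n) \<Rightarrow> n - m)) \<rparr>"

end

theory Submission
  imports Defs
begin


lemma vec_add_diff: "(p::'k\<Rightarrow>nat) \<le> q \<Longrightarrow> p + (q - p) = q"
  by (auto simp: fun_eq_iff le_fun_def)

lemma vec_ar1: "(q::'k\<Rightarrow>nat) \<le> r \<Longrightarrow> r \<le> D \<Longrightarrow> D - q = (r - q) + (D - r)"
  by (auto simp: fun_eq_iff le_fun_def)
lemma vec_ar2: "(p::'k\<Rightarrow>nat) \<le> q \<Longrightarrow> q \<le> r \<Longrightarrow> (q - p) + (r - q) = r - p"
  by (auto simp: fun_eq_iff le_fun_def)
lemma vec_ar4: "((d::'k\<Rightarrow>nat) + q) - (d + p) = q - p"
  by (auto simp: fun_eq_iff le_fun_def)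
lemma vec_ar5: "(a::'k\<Rightarrow>nat) \<le> p \<Longrightarrow> p \<le> q \<Longrightarrow> (q - a) - (p - a) = q - p"
  by (auto simp: fun_eq_iff le_fun_def)
lemma vec_ar6: "(q::'k\<Rightarrow>nat) - q = 0" "(q::'k\<Rightarrow>nat) - 0 = q"
  by (auto simp: fun_eq_iff le_fun_def)

context fixes G :: "('m,'k::finite) kgraph" assumes kg: "kgraph G"
begin

lemma kgD:
  shows "l \<in> Mor G \<Longrightarrow> rng G l \<in> Mor G"
    and "l \<in> Mor G \<Longrightarrow> src G l \<in> Mor G"
    and "l \<in> Mor G \<Longrightarrow> rng G (rng G l) = rng G l"
    and "l \<in> Mor G \<Longrightarrow> src G (rng G l) = rng G l"
    and "l \<in> Mor G \<Longrightarrow> rng G (src G l) = src G l"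
    and "l \<in> Mor G \<Longrightarrow> src G (src G l) = src G l"
    and "l \<in> Mor G \<Longrightarrow> cmp G (rng G l) l = l"
    and "l \<in> Mor G \<Longrightarrow> cmp G l (src G l) = l"
  using kg unfolding kgraph_def by blast+

lemma kg_cmp:
  assumes "l \<in> Mor G" "u \<in> Mor G" "src G l = rng G u"
  shows "cmp G l u \<in> Mor G" "rng G (cmp G l u) = rng G l" "src G (cmp G l u) = src G u"
    "deg G (cmp G l u) = deg G l + deg G u"
  using kg assms unfolding kgraph_def by blast+

lemma kg_assoc:
  assumes "l \<in> Mor G" "u \<in> Mor G" "w \<in> Mor G" "src G l = rng G u" "src G u = rng G w"
  shows "cmp G (cmp G l u) w = cmp G l (cmp G u w)"
  using kg assms unfolding kgraph_def by blast

lemma kg_fact: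
  assumes "l \<in> Mor G" "deg G l = m + n"
  shows "\<exists>!p. fst p \<in> Mor G \<and> snd p \<in> Mor G \<and> src G (fst p) = rng G (snd p) \<and>
               deg G (fst p) = m \<and> deg G (snd p) = n \<and> cmp G (fst p) (snd p) = l"
  using kg assms unfolding kgraph_def by blast

lemma fact_ex:
  assumes "l \<in> Mor G" "deg G l = m + n"
  obtains a b where "a \<in> Mor G" "b \<in> Mor G" "src G a = rng G b" "deg G a = m" "deg G b = n"
    "cmp G a b = l"
  using kg_fact[OF assms] by blast

lemma fact_uniq:
  assumes "a \<in> Mor G" "b \<in> Mor G" "src G a = rng G b"
    "a' \<in> Mor G" "b' \<in> Mor G" "src G a' = rng G b'"
    "deg G a = deg G a'" "deg G b = deg G b'" "cmp G a b = cmp G a' b'"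
  shows "a = a' \<and> b = b'"
proof -
  have "cmp G a b \<in> Mor G" "deg G (cmp G a b) = deg G a + deg G b"
    using kg_cmp assms by auto
  from kg_fact[OF this] have "\<exists>!p. fst p \<in> Mor G \<and> snd p \<in> Mor G \<and> src G (fst p) = rng G (snd p) \<and>
     deg G (fst p) = deg G a \<and> deg G (snd p) = deg G b \<and> cmp G (fst p) (snd p) = cmp G a b" .
  then have "(a,b) = (a',b')" using assms by (metis fst_conv snd_conv)
  then show ?thesis by simp
qed

lemma deg_rng: "l \<in> Mor G \<Longrightarrow> deg G (rng G l) = 0"
  using kg_cmp(4)[of "rng G l" l] kgD[of l] by (metis add_cancel_right_left)

lemma deg_src: "l \<in> Mor G \<Longrightarrow> deg G (src G l) = 0"
  using kg_cmp(4)[of l "src G l"] kgD[of l] by (metis add_cancel_left_right)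

lemma deg0_rng: assumes "l \<in> Mor G" "deg G l = 0" shows "rng G l = l"
proof -
  have "rng G l = l \<and> l = src G l"
    apply (rule fact_uniq)
    using assms kgD[of l] deg_rng deg_src by auto
  then show ?thesis by simp
qed

lemma deg0_src: assumes "l \<in> Mor G" "deg G l = 0" shows "src G l = l"
  using deg0_rng[OF assms] kgD[of l] assms by metis

lemma verts_iff: "v \<in> verts G \<longleftrightarrow> v \<in> Mor G \<and> deg G v = 0"
  unfolding verts_def using deg_rng deg0_rng kgD by (metis image_iff)

definition seg :: "'m \<Rightarrow> ('k \<Rightarrow> nat) \<Rightarrow> ('k \<Rightarrow> nat) \<Rightarrow> 'm" where
  "seg w p q = (THE c. \<exists>a b. a \<in> Mor G \<and> b \<in> Mor G \<and> c \<in> Mor G \<and> src G a = rng G c \<and>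
      src G c = rng G b \<and> deg G a = p \<and> deg G c = q - p \<and> cmp G a (cmp G c b) = w)"

lemma seg_uniq:
  assumes "a \<in> Mor G" "b \<in> Mor G" "c \<in> Mor G" "src G a = rng G c" "src G c = rng G b"
    "deg G a = p" "deg G c = d" "cmp G a (cmp G c b) = w"
    "a' \<in> Mor G" "b' \<in> Mor G" "c' \<in> Mor G" "src G a' = rng G c'" "src G c' = rng G b'"
    "deg G a' = p" "deg G c' = d" "cmp G a' (cmp G c' b') = w"
  shows "c = c'"
proof -
  have m1: "cmp G c b \<in> Mor G" "cmp G c' b' \<in> Mor G" using kg_cmp assms by auto
  have r1: "rng G (cmp G c b) = rng G c" "rng G (cmp G c' b') = rng G c'" using kg_cmp assms by auto
  have "deg G w = p + deg G (cmp G c b)" "deg G w = p + deg G (cmp G c' b')"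
    using kg_cmp m1 r1 assms by metis+
  then have dd: "deg G (cmp G c b) = deg G (cmp G c' b')" by simp
  have "a = a' \<and> cmp G c b = cmp G c' b'"
    by (rule fact_uniq) (use assms m1 r1 dd in auto)
  moreover have "deg G b = deg G b'" using dd kg_cmp(4) assms by (metis add_left_cancel)
  ultimately show ?thesis using fact_uniq[of c b c' b'] assms by auto
qed

lemma seg_eq:
  assumes "a \<in> Mor G" "b \<in> Mor G" "c \<in> Mor G" "src G a = rng G c" "src G c = rng G b"
    "deg G a = p" "deg G c = q - p" "cmp G a (cmp G c b) = w"
  shows "seg w p q = c"
  unfolding seg_def
  apply (rule the_equality)
  using assms apply blast
  using seg_uniq assms by blast

lemma seg_ex:
  assumes "w \<in> Mor G" "p \<le> q" "q \<le> deg G w"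
  obtains a b where "a \<in> Mor G" "b \<in> Mor G" "seg w p q \<in> Mor G" "src G a = rng G (seg w p q)"
    "src G (seg w p q) = rng G b" "deg G a = p" "deg G (seg w p q) = q - p"
    "cmp G a (cmp G (seg w p q) b) = w" "deg G b = deg G w - q"
proof -
  have "deg G w = p + (deg G w - p)" using assms vec_add_diff order_trans by metis
  from fact_ex[OF assms(1) this] obtain a r where ar: "a \<in> Mor G" "r \<in> Mor G" "src G a = rng G r"
    "deg G a = p" "deg G r = deg G w - p" "cmp G a r = w" by blast
  have "deg G r = (q - p) + (deg G w - q)" using ar assms vec_ar1 by metis
  from fact_ex[OF ar(2) this] obtain c b where cb: "c \<in> Mor G" "b \<in> Mor G" "src G c = rng G b"
    "deg G c = q - p" "deg G b = deg G w - q" "cmp G c b = r" by blast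
  have rc: "rng G r = rng G c" using cb kg_cmp by metis
  have "seg w p q = c" by (rule seg_eq[of a b]) (use ar cb rc in auto)
  then show ?thesis using that ar cb rc by auto
qed

end


context fixes G :: "('m,'k::finite) kgraph" assumes kg: "kgraph G"
begin

lemma seg_comp:
  assumes "w \<in> Mor G" "p \<le> q" "q \<le> r" "r \<le> deg G w"
  shows "src G (seg G w p q) = rng G (seg G w q r)" "cmp G (seg G w p q) (seg G w q r) = seg G w p r"
proof -
  obtain a b1 where ab: "a \<in> Mor G" "b1 \<in> Mor G" "seg G w p q \<in> Mor G" "src G a = rng G (seg G w p q)"
    "src G (seg G w p q) = rng G b1" "deg G a = p" "deg G (seg G w p q) = q - p"
    "cmp G a (cmp G (seg G w p q) b1) = w" "deg G b1 = deg G w - q"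
    using seg_ex[OF kg assms(1,2)] assms(3,4) order_trans[of q r "deg G w"] by blast
  define c1 where "c1 = seg G w p q"
  have "deg G b1 = (r - q) + (deg G w - r)" using ab assms vec_ar1 by metis
  from fact_ex[OF kg ab(2) this] obtain c2 b2 where cb: "c2 \<in> Mor G" "b2 \<in> Mor G" "src G c2 = rng G b2"
    "deg G c2 = r - q" "deg G b2 = deg G w - r" "cmp G c2 b2 = b1" by blast
  have rb1: "rng G b1 = rng G c2" using cb kg_cmp[OF kg] by metis
  have c12: "cmp G c1 c2 \<in> Mor G" "rng G (cmp G c1 c2) = rng G c1" "src G (cmp G c1 c2) = src G c2"
     "deg G (cmp G c1 c2) = (q - p) + (r - q)" using kg_cmp[OF kg, of c1 c2] ab cb rb1 c1_def by auto
  have "cmp G c1 b1 = cmp G (cmp G c1 c2) b2" using kg_assoc[OF kg, of c1 c2 b2] ab cb rb1 c1_def by auto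
  then have "seg G w p r = cmp G c1 c2"
    apply (intro seg_eq[OF kg, of a b2])
    using ab cb c12 c1_def assms vec_ar2[of p q r] by auto
  moreover have "seg G w q r = c2"
  proof -
    have ac: "cmp G a c1 \<in> Mor G" "src G (cmp G a c1) = src G c1" "deg G (cmp G a c1) = p + (q - p)"
      using kg_cmp[OF kg, of a c1] ab c1_def by auto
    have "cmp G (cmp G a c1) (cmp G c2 b2) = w"
      using kg_assoc[OF kg, of a c1 "cmp G c2 b2"] ab cb rb1 c1_def by auto
    then show ?thesis
      apply (intro seg_eq[OF kg, of "cmp G a c1" b2])
      using ab cb ac c1_def rb1 assms vec_add_diff[of p q] by auto
  qed
  ultimately show "src G (seg G w p q) = rng G (seg G w q r)" "cmp G (seg G w p q) (seg G w q r) = seg G w p r"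
    using c1_def ab rb1 by auto
qed

lemma seg_Mor: "w \<in> Mor G \<Longrightarrow> p \<le> q \<Longrightarrow> q \<le> deg G w \<Longrightarrow> seg G w p q \<in> Mor G \<and> deg G (seg G w p q) = q - p"
  using seg_ex[OF kg, of w p q] by blast

lemma seg_rng:
  assumes "w \<in> Mor G" "p \<le> q" "q \<le> deg G w"
  shows "rng G (seg G w p q) = seg G w p p"
proof -
  obtain a b where ab: "a \<in> Mor G" "b \<in> Mor G" "seg G w p q \<in> Mor G" "src G a = rng G (seg G w p q)"
    "src G (seg G w p q) = rng G b" "deg G a = p" "deg G (seg G w p q) = q - p"
    "cmp G a (cmp G (seg G w p q) b) = w"
    using seg_ex[OF kg assms] by metis
  define c where "c = seg G w p q"
  have e: "cmp G (rng G c) (cmp G c b) = cmp G c b"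
    using kg_assoc[OF kg, of "rng G c" c b] kgD[OF kg, of c] ab c_def by auto
  have "seg G w p p = rng G c"
    apply (rule seg_eq[OF kg, of a "cmp G c b"])
    using ab c_def e kgD[OF kg, of c] kg_cmp[OF kg, of c b] deg_rng[OF kg, of c] by auto
  then show ?thesis using c_def by simp
qed

lemma seg_src:
  assumes "w \<in> Mor G" "p \<le> q" "q \<le> deg G w"
  shows "src G (seg G w p q) = seg G w q q"
proof -
  obtain a b where ab: "a \<in> Mor G" "b \<in> Mor G" "seg G w p q \<in> Mor G" "src G a = rng G (seg G w p q)"
    "src G (seg G w p q) = rng G b" "deg G a = p" "deg G (seg G w p q) = q - p"
    "cmp G a (cmp G (seg G w p q) b) = w"
    using seg_ex[OF kg assms] by metis
  define c where "c = seg G w p q"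
  have ac: "cmp G a c \<in> Mor G" "src G (cmp G a c) = src G c" "deg G (cmp G a c) = p + (q - p)"
    using kg_cmp[OF kg, of a c] ab c_def by auto
  have e: "cmp G (cmp G a c) (cmp G (src G c) b) = w"
    using kg_assoc[OF kg, of a c b] kgD[OF kg, of b] ab c_def by auto
  have "seg G w q q = src G c"
    apply (rule seg_eq[OF kg, of "cmp G a c" b])
    using ab c_def e ac kgD[OF kg, of c] deg_src[OF kg, of c] assms vec_add_diff[of p q] vec_ar6 by auto
  then show ?thesis using c_def by simp
qed

lemma seg_cmp_left:
  assumes "a \<in> Mor G" "b \<in> Mor G" "src G a = rng G b" "p \<le> q" "q \<le> deg G a"
  shows "seg G (cmp G a b) p q = seg G a p q"
proof -
  obtain a1 a2 where ab: "a1 \<in> Mor G" "a2 \<in> Mor G" "seg G a p q \<in> Mor G" "src G a1 = rng G (seg G a p q)"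
    "src G (seg G a p q) = rng G a2" "deg G a1 = p" "deg G (seg G a p q) = q - p"
    "cmp G a1 (cmp G (seg G a p q) a2) = a"
    using seg_ex[OF kg assms(1,4,5)] by metis
  define c where "c = seg G a p q"
  have m: "cmp G c a2 \<in> Mor G" "src G (cmp G c a2) = src G a2" using kg_cmp[OF kg, of c a2] ab c_def by auto
  have sa: "src G a = src G a2" using kg_cmp[OF kg] ab m c_def by metis
  have e1: "cmp G (cmp G c a2) b = cmp G c (cmp G a2 b)" using kg_assoc[OF kg, of c a2 b] ab c_def sa assms by auto
  have rc: "rng G (cmp G c a2) = rng G c" using kg_cmp(2)[OF kg, of c a2] ab c_def by auto
  have e2: "cmp G a b = cmp G a1 (cmp G (cmp G c a2) b)" using kg_assoc[OF kg, of a1 "cmp G c a2" b] ab c_def sa assms m rc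
    by simp
  show ?thesis unfolding c_def[symmetric]
    apply (rule seg_eq[OF kg, of a1 "cmp G a2 b"])
    using ab c_def e1 e2 kg_cmp[OF kg, of a2 b] sa assms by auto
qed

lemma seg_cmp_right:
  assumes "a \<in> Mor G" "b \<in> Mor G" "src G a = rng G b" "p \<le> q" "q \<le> deg G b"
  shows "seg G (cmp G a b) (deg G a + p) (deg G a + q) = seg G b p q"
proof -
  obtain b1 b2 where ab: "b1 \<in> Mor G" "b2 \<in> Mor G" "seg G b p q \<in> Mor G" "src G b1 = rng G (seg G b p q)"
    "src G (seg G b p q) = rng G b2" "deg G b1 = p" "deg G (seg G b p q) = q - p"
    "cmp G b1 (cmp G (seg G b p q) b2) = b"
    using seg_ex[OF kg assms(2,4,5)] by metis
  define c where "c = seg G b p q"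
  have m: "cmp G c b2 \<in> Mor G" "rng G (cmp G c b2) = rng G c" using kg_cmp[OF kg, of c b2] ab c_def by auto
  have rb: "rng G b = rng G b1" using kg_cmp[OF kg] ab m c_def by metis
  have e: "cmp G a b = cmp G (cmp G a b1) (cmp G c b2)"
    using kg_assoc[OF kg, of a b1 "cmp G c b2"] ab c_def m rb assms by auto
  show ?thesis unfolding c_def[symmetric]
    apply (rule seg_eq[OF kg, of "cmp G a b1" b2])
    using ab c_def e kg_cmp[OF kg, of a b1] rb assms vec_ar4 by auto
qed

lemma seg_all: assumes "w \<in> Mor G" shows "seg G w 0 (deg G w) = w"
proof -
  have e: "cmp G (rng G w) (cmp G w (src G w)) = w" using kgD(7,8)[OF kg assms] by simp
  show ?thesis
    apply (rule seg_eq[OF kg, of "rng G w" "src G w"])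
    using kgD(1,2,3,4,5,6)[OF kg assms] deg_rng[OF kg assms] e assms vec_ar6 by simp_all
qed



end

lemma nle_mono: assumes "p \<le> q" "nle q m" shows "nle p m"
  unfolding nle_def
proof
  fix i
  have "p i \<le> q i" using assms(1) by (rule le_funD)
  then have "enat (p i) \<le> enat (q i)" by simp
  moreover have "enat (q i) \<le> m i" using assms(2) unfolding nle_def by blast
  ultimately show "enat (p i) \<le> m i" by (rule order_trans)
qed

lemma nle_0: "nle 0 m" by (simp add: nle_def zero_enat_def[symmetric])

context fixes G :: "('m,'k::finite) kgraph" assumes kg: "kgraph G"
begin

lemma gm_parts:
  assumes "graph_morphism G x"
  shows "\<forall>p q. \<not> (p \<le> q \<and> nle q (fst x)) \<longrightarrow> snd x p q = undefined"
   "\<forall>p q. p \<le> q \<and> nle q (fst x) \<longrightarrow>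
        snd x p q \<in> Mor G \<and> deg G (snd x p q) = q - p \<and>
        rng G (snd x p q) = snd x p p \<and> src G (snd x p q) = snd x q q"
   "\<forall>p. nle p (fst x) \<longrightarrow> snd x p p \<in> verts G"
   "\<forall>p q r. p \<le> q \<and> q \<le> r \<and> nle r (fst x) \<longrightarrow>
        cmp G (snd x p q) (snd x q r) = snd x p r"
  using assms unfolding graph_morphism_def by simp_all

lemma gmD:
  assumes "graph_morphism G x" "p \<le> q" "nle q (fst x)"
  shows "snd x p q \<in> Mor G" "deg G (snd x p q) = q - p" "rng G (snd x p q) = snd x p p"
    "src G (snd x p q) = snd x q q"
  using gm_parts(2)[OF assms(1)] assms(2,3) by simp_all

lemma gm_out: "graph_morphism G x \<Longrightarrow> \<not> (p \<le> q \<and> nle q (fst x)) \<Longrightarrow> snd x p q = undefined"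
  using gm_parts(1) by blast

lemma gm_vert: "graph_morphism G x \<Longrightarrow> nle p (fst x) \<Longrightarrow> snd x p p \<in> verts G"
  using gm_parts(3) by blast

lemma gm_cmp: "graph_morphism G x \<Longrightarrow> p \<le> q \<Longrightarrow> q \<le> r \<Longrightarrow> nle r (fst x) \<Longrightarrow>
    cmp G (snd x p q) (snd x q r) = snd x p r"
  using gm_parts(4) by blast

lemma gm_seg:
  assumes gm: "graph_morphism G x" and "a \<le> p" "p \<le> q" "q \<le> r" "nle r (fst x)"
  shows "seg G (snd x a r) (p - a) (q - a) = snd x p q"
proof -
  have n: "nle q (fst x)" using assms nle_mono by blast
  then have n: "nle p (fst x)" "nle q (fst x)" using assms nle_mono by blast+
  have e: "snd x a r = cmp G (snd x a p) (cmp G (snd x p q) (snd x q r))"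
    using gm_cmp[OF gm, of p q r] gm_cmp[OF gm, of a p r] assms by auto
  have ap: "a \<le> p" "nle p (fst x)" using assms n by auto
  have pq: "p \<le> q" "nle q (fst x)" using assms n by auto
  have qr: "q \<le> r" "nle r (fst x)" using assms by auto
  show ?thesis
    by (rule seg_eq[OF kg gmD(1)[OF gm ap] gmD(1)[OF gm qr] gmD(1)[OF gm pq]])
      (simp_all only: gmD(2,3,4)[OF gm ap] gmD(2,3,4)[OF gm qr] gmD(2,3,4)[OF gm pq] vec_ar5[OF assms(2,3)] e)
qed

end


lemma vec_zero_le: "(0::'k\<Rightarrow>nat) \<le> q" by (simp add: le_fun_def)

lemma vec_sub_mono: "(d::'k\<Rightarrow>nat) \<le> Q \<Longrightarrow> Q \<le> Q' \<Longrightarrow> Q - d \<le> Q' - d"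
  unfolding le_fun_def by (simp add: diff_le_mono)

lemma nle_shift_iff: assumes "nle p m" shows "nle b (\<lambda>i. m i - enat (p i)) \<longleftrightarrow> nle (b + p) m"
  unfolding nle_def
proof (intro iffI allI)
  fix i
  have pi: "enat (p i) \<le> m i" using assms unfolding nle_def by blast
  { assume "\<forall>i. enat (b i) \<le> m i - enat (p i)"
    then have "enat (b i) \<le> m i - enat (p i)" by blast
    then show "enat ((b + p) i) \<le> m i" using pi by (cases "m i") auto }
  { assume "\<forall>i. enat ((b + p) i) \<le> m i"
    then have "enat ((b + p) i) \<le> m i" by blast
    then show "enat (b i) \<le> m i - enat (p i)" using pi by (cases "m i") auto }
qed

lemma nle_add_iff: assumes "(d::'k\<Rightarrow>nat) \<le> Q" shows "nle Q (\<lambda>i. enat (d i) + y i) \<longleftrightarrow> nle (Q - d) y"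
  unfolding nle_def
proof (intro iffI allI)
  fix i
  have di: "d i \<le> Q i" using assms by (rule le_funD)
  { assume "\<forall>i. enat (Q i) \<le> enat (d i) + y i"
    then have "enat (Q i) \<le> enat (d i) + y i" by blast
    then show "enat ((Q - d) i) \<le> y i" using di by (cases "y i") auto }
  { assume "\<forall>i. enat ((Q - d) i) \<le> y i"
    then have "enat ((Q - d) i) \<le> y i" by blast
    then show "enat (Q i) \<le> enat (d i) + y i" using di by (cases "y i") auto }
qed

lemma nle_dl: "nle d (\<lambda>i. enat (d i) + y i)"
  unfolding nle_def
proof
  fix i show "enat (d i) \<le> enat (d i) + y i" by (cases "y i") auto
qed

lemma nle_sup: "nle q m \<Longrightarrow> nle d m \<Longrightarrow> nle (sup q d) m"
  unfolding nle_def by (simp add: sup_max max_def)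

lemma enat_add_sub: "(\<lambda>i. enat (d i) + y i - enat (d i)) = y"
proof
  fix i show "enat (d i) + y i - enat (d i) = y i" by (cases "y i") auto
qed

lemma vec_sup_ge: "q \<le> sup q (d::'k\<Rightarrow>nat)" "d \<le> sup q d" by simp_all

lemma vec_add_sub: "((b::'k\<Rightarrow>nat) + d) - d = b" by (simp add: fun_eq_iff)

lemma vec_le_sub: assumes "(d::'k\<Rightarrow>nat) + n \<le> p" shows "n \<le> p - d"
  unfolding le_fun_def
proof
  fix x have "d x + n x \<le> p x" using le_funD[OF assms, of x] by simp
  then show "n x \<le> (p - d) x" by simp
qed

lemma vec_le_add2: "(d::'k\<Rightarrow>nat) \<le> b + d" unfolding le_fun_def by simp

lemma nle_add: assumes "nle Q y" shows "nle (d + Q) (\<lambda>i. enat (d i) + y i)"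
  unfolding nle_def
proof
  fix i have "enat (Q i) \<le> y i" using assms unfolding nle_def by blast
  then show "enat ((d + Q) i) \<le> enat (d i) + y i" by (cases "y i") auto
qed

lemma vec_le_add: "(d::'k\<Rightarrow>nat) \<le> d + n" unfolding le_fun_def by simp

lemma vec_sub_add: "(d::'k\<Rightarrow>nat) \<le> p \<Longrightarrow> (p - d) + d = p"
  unfolding le_fun_def by (simp add: fun_eq_iff)

context fixes G :: "('m,'k::finite) kgraph" assumes kg: "kgraph G"
begin

definition wq :: "'m \<Rightarrow> ('m,'k) gpath \<Rightarrow> ('k \<Rightarrow> nat) \<Rightarrow> 'm" where "wq l y Q = cmp G l (snd y 0 (Q - deg G l))"

definition cc :: "'m \<Rightarrow> ('m,'k) gpath \<Rightarrow> ('m,'k) gpath" where "cc l y = ((\<lambda>i. enat (deg G l i) + fst y i),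
   (\<lambda>p q. if p \<le> q \<and> nle q (\<lambda>i. enat (deg G l i) + fst y i)
      then seg G (wq l y (sup q (deg G l))) p q else undefined))"

lemma wq_Mor:
  assumes l: "l \<in> Mor G" and y: "graph_morphism G y" "snd y 0 0 = src G l"
    and Q: "deg G l \<le> Q" "nle (Q - deg G l) (fst y)"
  shows "wq l y Q \<in> Mor G" "deg G (wq l y Q) = Q" "rng G (wq l y Q) = rng G l"
proof -
  have a: "snd y 0 (Q - deg G l) \<in> Mor G" "deg G (snd y 0 (Q - deg G l)) = Q - deg G l"
    "rng G (snd y 0 (Q - deg G l)) = snd y 0 0"
    using gmD[OF kg y(1) vec_zero_le Q(2)] by (simp_all add: vec_ar6)
  show "wq l y Q \<in> Mor G" "deg G (wq l y Q) = Q" "rng G (wq l y Q) = rng G l"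
    unfolding wq_def using kg_cmp[OF kg l a(1)] a y(2) vec_add_diff[OF Q(1)] by simp_all
qed

lemma wq_mono:
  assumes l: "l \<in> Mor G" and y: "graph_morphism G y" "snd y 0 0 = src G l"
    and Q: "deg G l \<le> Q" "Q \<le> Q'" "nle (Q' - deg G l) (fst y)"
    and pq: "p \<le> q" "q \<le> Q"
  shows "seg G (wq l y Q') p q = seg G (wq l y Q) p q"
proof -
  define d where "d = deg G l"
  have le: "Q - d \<le> Q' - d" using vec_sub_mono Q d_def by blast
  have nQ: "nle (Q - d) (fst y)" using nle_mono[OF le] Q d_def by blast
  have a1: "snd y 0 (Q - d) \<in> Mor G" "rng G (snd y 0 (Q - d)) = snd y 0 0"
      "src G (snd y 0 (Q - d)) = snd y (Q - d) (Q - d)"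
    using gmD[OF kg y(1) vec_zero_le nQ] by simp_all
  have a2: "snd y (Q - d) (Q' - d) \<in> Mor G" "rng G (snd y (Q - d) (Q' - d)) = snd y (Q - d) (Q - d)"
    using gmD[OF kg y(1) le] Q d_def by simp_all
  have c: "snd y 0 (Q' - d) = cmp G (snd y 0 (Q - d)) (snd y (Q - d) (Q' - d))"
    using gm_cmp[OF kg y(1) vec_zero_le le] Q d_def by simp
  have e: "wq l y Q' = cmp G (wq l y Q) (snd y (Q - d) (Q' - d))"
    unfolding wq_def d_def[symmetric] c
    using kg_assoc[OF kg l a1(1) a2(1)] a1 a2 y(2) by simp
  have w: "wq l y Q \<in> Mor G" "deg G (wq l y Q) = Q" using wq_Mor[OF l y Q(1)] nQ d_def by simp_all
  have s: "src G (wq l y Q) = rng G (snd y (Q - d) (Q' - d))"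
    unfolding wq_def d_def[symmetric] using kg_cmp[OF kg l a1(1)] a1 a2 y(2) by simp
  show ?thesis unfolding e
    by (rule seg_cmp_left[OF kg w(1) a2(1) s pq(1)]) (simp add: w pq)
qed

lemma cc_seg:
  assumes l: "l \<in> Mor G" and y: "graph_morphism G y" "snd y 0 0 = src G l"
    and pq: "p \<le> q" "q \<le> Q" and Q: "deg G l \<le> Q" "nle (Q - deg G l) (fst y)"
  shows "snd (cc l y) p q = seg G (wq l y Q) p q"
proof -
  define d where "d = deg G l"
  have nQ: "nle Q (\<lambda>i. enat (d i) + fst y i)" using nle_add_iff[of d Q "fst y"] Q d_def by simp
  have nq: "nle q (\<lambda>i. enat (d i) + fst y i)" using nle_mono[OF pq(2) nQ] .
  have sQ: "sup q d \<le> Q" using pq Q d_def by simp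
  have ns: "nle (sup q d - d) (fst y)"
    using nle_add_iff[of d "sup q d" "fst y"] nle_sup[OF nq nle_dl] by simp
  have "snd (cc l y) p q = seg G (wq l y (sup q d)) p q"
    unfolding cc_def d_def using pq nq d_def by simp
  also have "\<dots> = seg G (wq l y Q) p q"
    using wq_mono[OF l y _ sQ _ pq(1), of ] Q d_def by (simp add: vec_sup_ge)
  finally show ?thesis .
qed


lemma cc_fst: "fst (cc l y) = (\<lambda>i. enat (deg G l i) + fst y i)" by (simp add: cc_def)

lemma cc_out: "\<not> (p \<le> q \<and> nle q (fst (cc l y))) \<Longrightarrow> snd (cc l y) p q = undefined"
  by (auto simp: cc_def)

lemma cc_Q:
  assumes "p \<le> q" "nle q (fst (cc l y))"
  shows "deg G l \<le> sup q (deg G l)" "q \<le> sup q (deg G l)"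
    "nle (sup q (deg G l) - deg G l) (fst y)"
proof -
  show "deg G l \<le> sup q (deg G l)" "q \<le> sup q (deg G l)" by simp_all
  have "nle (deg G l) (fst (cc l y))" unfolding cc_fst by (rule nle_dl)
  then have "nle (sup q (deg G l)) (fst (cc l y))" using nle_sup[OF assms(2)] by blast
  then show "nle (sup q (deg G l) - deg G l) (fst y)" using nle_add_iff[of "deg G l" "sup q (deg G l)" "fst y"]
    by (simp add: cc_fst)
qed

lemma cc_gm:
  assumes l: "l \<in> Mor G" and y: "graph_morphism G y" "snd y 0 0 = src G l"
  shows "graph_morphism G (cc l y)"
  unfolding graph_morphism_def
proof (intro conjI allI impI)
  fix p q assume "\<not> (p \<le> q \<and> nle q (fst (cc l y)))"
  then show "snd (cc l y) p q = undefined" by (rule cc_out)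
next
  fix p q assume a: "p \<le> q \<and> nle q (fst (cc l y))"
  define Q where "Q = sup q (deg G l)"
  note QQ = cc_Q[OF conjunct1[OF a] conjunct2[OF a], folded Q_def]
  have w: "wq l y Q \<in> Mor G" "deg G (wq l y Q) = Q" using wq_Mor[OF l y QQ(1,3)] by simp_all
  have pQ: "p \<le> Q" using order_trans[OF conjunct1[OF a] QQ(2)] .
  have e1: "snd (cc l y) p q = seg G (wq l y Q) p q" using cc_seg[OF l y _ QQ(2) QQ(1,3)] a by simp
  have e2: "snd (cc l y) p p = seg G (wq l y Q) p p" using cc_seg[OF l y _ pQ QQ(1,3)] by simp
  have e3: "snd (cc l y) q q = seg G (wq l y Q) q q" using cc_seg[OF l y _ QQ(2) QQ(1,3)] by simp
  show "snd (cc l y) p q \<in> Mor G" "deg G (snd (cc l y) p q) = q - p"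
    using seg_Mor[OF kg w(1), of p q] a QQ w e1 by simp_all
  show "rng G (snd (cc l y) p q) = snd (cc l y) p p"
    using seg_rng[OF kg w(1), of p q] a QQ w e1 e2 by simp
  show "src G (snd (cc l y) p q) = snd (cc l y) q q"
    using seg_src[OF kg w(1), of p q] a QQ w e1 e3 by simp
next
  fix p assume a: "nle p (fst (cc l y))"
  define Q where "Q = sup p (deg G l)"
  note QQ = cc_Q[OF order_refl a, folded Q_def]
  have w: "wq l y Q \<in> Mor G" "deg G (wq l y Q) = Q" using wq_Mor[OF l y QQ(1,3)] by simp_all
  have e2: "snd (cc l y) p p = seg G (wq l y Q) p p" using cc_seg[OF l y _ QQ(2) QQ(1,3)] by simp
  show "snd (cc l y) p p \<in> verts G"
    using seg_Mor[OF kg w(1), of p p] QQ w e2 verts_iff[OF kg] vec_ar6 by simp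
next
  fix p q r assume a: "p \<le> q \<and> q \<le> r \<and> nle r (fst (cc l y))"
  define Q where "Q = sup r (deg G l)"
  note QQ = cc_Q[OF order_refl conjunct2[OF conjunct2[OF a]], folded Q_def]
  have w: "wq l y Q \<in> Mor G" "deg G (wq l y Q) = Q" using wq_Mor[OF l y QQ(1,3)] by simp_all
  have qQ: "q \<le> Q" using order_trans[OF conjunct1[OF conjunct2[OF a]] QQ(2)] .
  have e1: "snd (cc l y) p q = seg G (wq l y Q) p q" using cc_seg[OF l y _ qQ QQ(1,3)] a by simp
  have e2: "snd (cc l y) q r = seg G (wq l y Q) q r" using cc_seg[OF l y _ QQ(2) QQ(1,3)] a by simp
  have pr: "p \<le> r" using order_trans[OF conjunct1[OF a] conjunct1[OF conjunct2[OF a]]] .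
  have e3: "snd (cc l y) p r = seg G (wq l y Q) p r" using cc_seg[OF l y pr QQ(2) QQ(1,3)] .
  show "cmp G (snd (cc l y) p q) (snd (cc l y) q r) = snd (cc l y) p r"
    using seg_comp(2)[OF kg w(1), of p q r] a QQ w e1 e2 e3 by simp
qed

lemma cc_0:
  assumes l: "l \<in> Mor G" and y: "graph_morphism G y" "snd y 0 0 = src G l"
  shows "snd (cc l y) 0 (deg G l) = l"
proof -
  have h: "snd (cc l y) 0 (deg G l) = seg G (wq l y (deg G l)) 0 (deg G l)"
    by (rule cc_seg[OF l y vec_zero_le order_refl order_refl]) (simp add: vec_ar6 nle_0)
  have h2: "wq l y (deg G l) = l" unfolding wq_def using y(2) kgD(8)[OF kg l] by (simp add: vec_ar6)
  show ?thesis using h h2 seg_all[OF kg l] by simp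
qed

lemma cc_shift:
  assumes l: "l \<in> Mor G" and y: "graph_morphism G y" "snd y 0 0 = src G l"
  shows "shift (deg G l) (cc l y) = y"
proof -
  define d where "d = deg G l"
  have f: "(\<lambda>i. fst (cc l y) i - enat (d i)) = fst y" unfolding cc_fst d_def by (rule enat_add_sub)
  have s: "(\<lambda>a b. if a \<le> b \<and> nle b (fst y) then snd (cc l y) (a + d) (b + d) else undefined) = snd y"
  proof (intro ext)
    fix a b
    show "(if a \<le> b \<and> nle b (fst y) then snd (cc l y) (a + d) (b + d) else undefined) = snd y a b"
    proof (cases "a \<le> b \<and> nle b (fst y)")
      case True
      have Q: "d \<le> b + d" "nle (b + d - d) (fst y)" using True by (simp_all add: vec_add_sub vec_le_add2)
      have ab: "a + d \<le> b + d" using True by (simp add: add_right_mono)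
      have h1: "snd (cc l y) (a + d) (b + d) = seg G (wq l y (b + d)) (a + d) (b + d)"
        using cc_seg[OF l y ab order_refl] Q d_def by simp
      have h2: "wq l y (b + d) = cmp G l (snd y 0 b)" unfolding wq_def d_def[symmetric] by (simp add: vec_add_sub)
      have h3: "seg G (cmp G l (snd y 0 b)) (a + d) (b + d) = seg G (snd y 0 b) a b"
      proof -
        have m: "snd y 0 b \<in> Mor G" "deg G (snd y 0 b) = b" "rng G (snd y 0 b) = snd y 0 0"
          using gmD[OF kg y(1) vec_zero_le, of b] True by (simp_all add: vec_ar6)
        show ?thesis using seg_cmp_right[OF kg l m(1) _ conjunct1[OF True], of] m y(2) d_def
          by (simp add: add.commute)
      qed
      have h4: "seg G (snd y 0 b) a b = snd y a b" using gm_seg[OF kg y(1) vec_zero_le, of a b b] True by (simp add: vec_ar6)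
      show ?thesis using True h1 h2 h3 h4 by simp
    next
      case False
      then show ?thesis using gm_out[OF kg y(1) False] by auto
    qed
  qed
  show ?thesis unfolding shift_def d_def[symmetric] f s by simp
qed

lemma cc_unique:
  assumes l: "l \<in> Mor G" and y: "graph_morphism G y" "snd y 0 0 = src G l"
    and z: "graph_morphism G z" "fst z = (\<lambda>i. enat (deg G l i) + fst y i)"
       "snd z 0 (deg G l) = l" "shift (deg G l) z = y"
  shows "z = cc l y"
proof (rule prod_eqI)
  show "fst z = fst (cc l y)" using z(2) cc_fst by simp
  show "snd z = snd (cc l y)"
  proof (intro ext)
    fix p q
    show "snd z p q = snd (cc l y) p q"
    proof (cases "p \<le> q \<and> nle q (fst z)")
      case False
      have "\<not> (p \<le> q \<and> nle q (fst (cc l y)))" using False z(2) cc_fst by simp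
      then show ?thesis using gm_out[OF kg z(1) False] cc_out by simp
    next
      case True
      define d where "d = deg G l"
      define Q where "Q = sup q d"
      have nq: "nle q (fst (cc l y))" using True z(2) cc_fst by simp
      note QQ = cc_Q[OF conjunct1[OF True] nq, folded d_def Q_def]
      have nd: "nle d (fst z)" using nle_dl z(2) d_def by simp
      have nQ: "nle Q (fst z)" using nle_sup[OF _ nd, of q] True Q_def by simp
      have pQ: "p \<le> Q" using order_trans[OF conjunct1[OF True] QQ(2)] .
      have "snd z p q = seg G (snd z 0 Q) p q"
        using gm_seg[OF kg z(1) vec_zero_le conjunct1[OF True] QQ(2) nQ] by (simp add: vec_ar6)
      also have "snd z 0 Q = cmp G (snd z 0 d) (snd z d Q)"
        using gm_cmp[OF kg z(1) vec_zero_le QQ(1) nQ] by simp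
      also have "snd z d Q = snd y 0 (Q - d)"
      proof -
        have "snd y 0 (Q - d) = snd (shift d z) 0 (Q - d)" using z(4) d_def by simp
        also have "\<dots> = snd z d Q"
        proof -
          have "(\<lambda>i. fst z i - enat (d i)) = fst y" using z(2) d_def enat_add_sub by simp
          then show ?thesis unfolding shift_def using QQ vec_zero_le[of "Q - d"]
            by (simp add: vec_sub_add)
        qed
        finally show ?thesis by simp
      qed
      also have "cmp G (snd z 0 d) (snd y 0 (Q - d)) = wq l y Q" unfolding wq_def using z(3) d_def by simp
      finally show ?thesis using cc_seg[OF l y conjunct1[OF True] QQ(2)] QQ d_def by simp
    qed
  qed
qed

lemma concat_eq:
  assumes l: "l \<in> Mor G" and y: "graph_morphism G y" "snd y 0 0 = src G l"
  shows "concat G l y = cc l y"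
  unfolding concat_def
  apply (rule the_equality)
  using cc_gm[OF l y] cc_fst cc_0[OF l y] cc_shift[OF l y] apply blast
  using cc_unique[OF l y] by blast

lemma concat_props:
  assumes l: "l \<in> Mor G" and y: "graph_morphism G y" "snd y 0 0 = src G l"
  shows "graph_morphism G (concat G l y)" "fst (concat G l y) = (\<lambda>i. enat (deg G l i) + fst y i)"
    "snd (concat G l y) 0 (deg G l) = l" "shift (deg G l) (concat G l y) = y"
  using concat_eq[OF l y] cc_gm[OF l y] cc_fst cc_0[OF l y] cc_shift[OF l y] by simp_all

lemma shift_snd: "a \<le> b \<Longrightarrow> nle b (fst (shift p x)) \<Longrightarrow> snd (shift p x) a b = snd x (a + p) (b + p)"
  by (simp add: shift_def)

lemma shift_fst: "fst (shift p x) = (\<lambda>i. fst x i - enat (p i))" by (simp add: shift_def)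

lemma concat_snd:
  assumes l: "l \<in> Mor G" and y: "graph_morphism G y" "snd y 0 0 = src G l"
    and ab: "a \<le> b" "nle b (fst y)"
  shows "snd (concat G l y) (a + deg G l) (b + deg G l) = snd y a b"
proof -
  have "snd y a b = snd (shift (deg G l) (concat G l y)) a b" using concat_props(4)[OF l y] by simp
  also have "\<dots> = snd (concat G l y) (a + deg G l) (b + deg G l)"
  proof -
    have "nle b (fst (shift (deg G l) (concat G l y)))" using concat_props(4)[OF l y] ab(2) by simp
    then show ?thesis using shift_snd[OF ab(1)] by blast
  qed
  finally show ?thesis by simp
qed

lemma concat_0Q:
  assumes l: "l \<in> Mor G" and y: "graph_morphism G y" "snd y 0 0 = src G l"
    and Q: "nle Q (fst y)"
  shows "snd (concat G l y) 0 (deg G l + Q) = cmp G l (snd y 0 Q)"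
proof -
  define z where "z = concat G l y"
  note zp = concat_props[OF l y, folded z_def]
  have n: "nle (deg G l + Q) (fst z)" using nle_add[OF Q] zp(2) by simp
  have h1: "snd z 0 (deg G l + Q) = cmp G (snd z 0 (deg G l)) (snd z (deg G l) (deg G l + Q))"
    using gm_cmp[OF kg zp(1) vec_zero_le vec_le_add n] by simp
  have h2: "snd z (deg G l) (deg G l + Q) = snd y 0 Q"
    using concat_snd[OF l y vec_zero_le Q] z_def by (simp add: add.commute)
  show ?thesis using h1 h2 zp(3) z_def by simp
qed

lemma concat_boundary:
  assumes l: "l \<in> Mor G" and y: "boundary_path G y" "snd y 0 0 = src G l"
  shows "boundary_path G (concat G l y)"
proof -
  have gy: "graph_morphism G y" using y unfolding boundary_path_def by simp
  obtain nx where nx: "nle nx (fst y)" "\<forall>p i. nx \<le> p \<and> nle p (fst y) \<and> enat (p i) = fst y i \<longrightarrow>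
           \<not> (\<exists>l\<in>Mor G. rng G l = snd y p p \<and> deg G l = basis i)"
    using y unfolding boundary_path_def by blast
  define z where "z = concat G l y"
  define d where "d = deg G l"
  note zp = concat_props[OF l gy y(2), folded z_def d_def]
  have n1: "nle (d + nx) (fst z)" using nle_add[OF nx(1)] zp(2) by simp
  have "\<forall>p i. d + nx \<le> p \<and> nle p (fst z) \<and> enat (p i) = fst z i \<longrightarrow>
           \<not> (\<exists>l\<in>Mor G. rng G l = snd z p p \<and> deg G l = basis i)"
  proof (intro allI impI)
    fix p i assume a: "d + nx \<le> p \<and> nle p (fst z) \<and> enat (p i) = fst z i"
    have dp: "d \<le> p" using order_trans[OF vec_le_add conjunct1[OF a]] .
    have p1: "nx \<le> p - d" using a vec_le_sub by blast
    have p2: "nle (p - d) (fst y)" using nle_add_iff[OF dp, of "fst y"] a zp(2) by simp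
    have p3: "enat ((p - d) i) = fst y i"
    proof -
      have "enat (p i) = enat (d i) + fst y i" using a zp(2) by simp
      then show ?thesis by (cases "fst y i") auto
    qed
    have "snd z p p = snd y (p - d) (p - d)"
      using concat_snd[OF l gy y(2) order_refl p2] z_def d_def vec_sub_add[OF dp] by simp
    then show "\<not> (\<exists>l\<in>Mor G. rng G l = snd z p p \<and> deg G l = basis i)"
      using nx(2)[rule_format, OF conjI[OF p1 conjI[OF p2 p3]]] by simp
  qed
  then show ?thesis unfolding boundary_path_def z_def[symmetric] using zp(1) n1 by blast
qed

lemma shift_gm:
  assumes x: "graph_morphism G x" and p: "nle p (fst x)"
  shows "graph_morphism G (shift p x)"
  unfolding graph_morphism_def
proof (intro conjI allI impI)
  fix a b assume "\<not> (a \<le> b \<and> nle b (fst (shift p x)))"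
  then show "snd (shift p x) a b = undefined" by (auto simp: shift_def)
next
  fix a b assume ab: "a \<le> b \<and> nle b (fst (shift p x))"
  have n: "nle (b + p) (fst x)" using ab nle_shift_iff[OF p, of b] unfolding shift_fst by simp
  have na: "nle a (fst (shift p x))" using nle_mono[OF conjunct1[OF ab] conjunct2[OF ab]] .
  have ab': "a + p \<le> b + p" using ab by (simp add: add_right_mono)
  note g = gmD[OF kg x ab' n]
  have e: "snd (shift p x) a b = snd x (a + p) (b + p)" "snd (shift p x) a a = snd x (a + p) (a + p)"
    "snd (shift p x) b b = snd x (b + p) (b + p)"
    using shift_snd[of a b p x] shift_snd[of a a p x] shift_snd[of b b p x] ab na by auto
  show "snd (shift p x) a b \<in> Mor G" "deg G (snd (shift p x) a b) = b - a"
    "rng G (snd (shift p x) a b) = snd (shift p x) a a" "src G (snd (shift p x) a b) = snd (shift p x) b b"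
    using g e by (simp_all add: vec_ar4 add.commute)
next
  fix a assume a: "nle a (fst (shift p x))"
  have n: "nle (a + p) (fst x)" using a nle_shift_iff[OF p, of a] unfolding shift_fst by simp
  show "snd (shift p x) a a \<in> verts G" using gm_vert[OF kg x n] shift_snd[OF order_refl a] by simp
next
  fix a b c assume a: "a \<le> b \<and> b \<le> c \<and> nle c (fst (shift p x))"
  have n: "nle (c + p) (fst x)" using a nle_shift_iff[OF p, of c] unfolding shift_fst by simp
  have nb: "nle b (fst (shift p x))" using nle_mono[of b c] a by simp
  have e: "snd (shift p x) a b = snd x (a + p) (b + p)" "snd (shift p x) b c = snd x (b + p) (c + p)"
    "snd (shift p x) a c = snd x (a + p) (c + p)"
    using shift_snd[of a b p x] shift_snd[of b c p x] shift_snd[of a c p x] a nb order_trans[of a b c] by auto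
  show "cmp G (snd (shift p x) a b) (snd (shift p x) b c) = snd (shift p x) a c"
    using gm_cmp[OF kg x _ _ n, of "a + p" "b + p"] a e by (simp add: add_right_mono)
qed

lemma shift_boundary:
  assumes x: "boundary_path G x" and p: "nle p (fst x)"
  shows "boundary_path G (shift p x)"
proof -
  have gx: "graph_morphism G x" using x unfolding boundary_path_def by simp
  obtain nx where nx: "nle nx (fst x)" "\<forall>q i. nx \<le> q \<and> nle q (fst x) \<and> enat (q i) = fst x i \<longrightarrow>
           \<not> (\<exists>l\<in>Mor G. rng G l = snd x q q \<and> deg G l = basis i)"
    using x unfolding boundary_path_def by blast
  have n1: "nle (nx - p) (fst (shift p x))" unfolding shift_fst nle_def
  proof
    fix i
    have "enat (nx i) \<le> fst x i" "enat (p i) \<le> fst x i" using nx(1) p unfolding nle_def by auto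
    then show "enat ((nx - p) i) \<le> fst x i - enat (p i)" by (cases "fst x i") auto
  qed
  have "\<forall>q i. nx - p \<le> q \<and> nle q (fst (shift p x)) \<and> enat (q i) = fst (shift p x) i \<longrightarrow>
           \<not> (\<exists>l\<in>Mor G. rng G l = snd (shift p x) q q \<and> deg G l = basis i)"
  proof (intro allI impI)
    fix q i assume a: "nx - p \<le> q \<and> nle q (fst (shift p x)) \<and> enat (q i) = fst (shift p x) i"
    have q1: "nx \<le> q + p" unfolding le_fun_def
    proof
      fix j have "nx j - p j \<le> q j" using le_funD[OF conjunct1[OF a], of j] by simp
      then show "nx j \<le> (q + p) j" by simp
    qed
    have q2: "nle (q + p) (fst x)" using a nle_shift_iff[OF p, of q] unfolding shift_fst by simp
    have q3: "enat ((q + p) i) = fst x i"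
    proof -
      have "enat (p i) \<le> fst x i" using p unfolding nle_def by auto
      moreover have "enat (q i) = fst x i - enat (p i)" using a unfolding shift_fst by simp
      ultimately show ?thesis by (cases "fst x i") auto
    qed
    have "snd (shift p x) q q = snd x (q + p) (q + p)" using shift_snd a by blast
    then show "\<not> (\<exists>l\<in>Mor G. rng G l = snd (shift p x) q q \<and> deg G l = basis i)"
      using nx(2)[rule_format, OF conjI[OF q1 conjI[OF q2 q3]]] by simp
  qed
  then show ?thesis unfolding boundary_path_def using shift_gm[OF gx p] n1 by blast
qed

end


lemma nmin_nle: "nle (nmin p m) m"
  unfolding nle_def nmin_def
proof
  fix i show "enat (if enat (p i) \<le> m i then p i else the_enat (m i)) \<le> m i"
    by (cases "m i") auto
qed

lemma nmin_le: "nmin p m \<le> p"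
  unfolding le_fun_def nmin_def
proof
  fix i show "(if enat (p i) \<le> m i then p i else the_enat (m i)) \<le> p i"
    by (cases "m i") auto
qed

lemma nmin_ge: assumes "d \<le> p" "nle d m" shows "d \<le> nmin p m"
  unfolding le_fun_def nmin_def
proof
  fix i
  have "d i \<le> p i" "enat (d i) \<le> m i" using assms unfolding nle_def by (auto simp: le_funD)
  then show "d i \<le> (if enat (p i) \<le> m i then p i else the_enat (m i))"
    by (cases "m i") auto
qed

lemma nmin_id: "nle p m \<Longrightarrow> nmin p m = p"
  unfolding nle_def nmin_def by (simp add: fun_eq_iff)

lemma nmin_id_nle: assumes "p \<le> nmin p m" shows "nle p m"
  unfolding nle_def
proof
  fix i
  have "p i \<le> nmin p m i" using assms by (rule le_funD)
  then show "enat (p i) \<le> m i" unfolding nmin_def by (cases "m i") (auto split: if_splits)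
qed

lemma nmin_sub0: "p - nmin p m = 0 \<longleftrightarrow> nle p m"
proof
  assume "p - nmin p m = 0"
  then have "p \<le> nmin p m" unfolding le_fun_def by (simp add: fun_eq_iff)
  then show "nle p m" by (rule nmin_id_nle)
next
  assume "nle p m" then show "p - nmin p m = 0" by (simp add: nmin_id)
qed

lemma nmin_mono: assumes "p \<le> q" shows "nmin p m \<le> nmin q m"
  unfolding le_fun_def nmin_def
proof
  fix i
  have "p i \<le> q i" using assms by (rule le_funD)
  then show "(if enat (p i) \<le> m i then p i else the_enat (m i)) \<le> (if enat (q i) \<le> m i then q i else the_enat (m i))"
    by (cases "m i") auto
qed

lemma not_nle_mono: "p \<le> q \<Longrightarrow> \<not> nle p m \<Longrightarrow> \<not> nle q m"
  using nle_mono by blast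

lemma not_nleE: assumes "\<not> nle p m" obtains i where "\<not> enat (p i) \<le> m i"
  using assms unfolding nle_def by blast

context fixes G :: "('m,'k::finite) kgraph" assumes kg: "kgraph G"
begin

lemma Pset_iff: "(x, m, n) \<in> Pset G \<longleftrightarrow> boundary_path G x \<and> m \<le> n \<and> \<not> nle n (fst x)"
  by (simp add: Pset_def)

lemma prel_iff: "prel G (x, m, n) (y, p, q) \<longleftrightarrow> (x, m, n) \<in> Pset G \<and> (y, p, q) \<in> Pset G \<and>
   snd x (nmin m (fst x)) (nmin n (fst x)) = snd y (nmin p (fst y)) (nmin q (fst y)) \<and>
   m - nmin m (fst x) = p - nmin p (fst y) \<and> n - m = q - p"
  by (simp add: prel_def)

lemma prel_refl: "a \<in> Pset G \<Longrightarrow> prel G a a"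
  by (cases a) (auto simp: prel_iff)

lemma prel_sym: "prel G a b \<Longrightarrow> prel G b a"
  by (cases a; cases b) (auto simp: prel_iff)

lemma prel_trans: "prel G a b \<Longrightarrow> prel G b c \<Longrightarrow> prel G a c"
  by (cases a; cases b; cases c) (auto simp: prel_iff)

lemma prel_Pset: "prel G a b \<Longrightarrow> a \<in> Pset G \<and> b \<in> Pset G"
  by (simp add: prel_def)

lemma pclass_eq: "prel G a b \<Longrightarrow> pclass G a = pclass G b"
  unfolding pclass_def using prel_sym prel_trans by blast

lemma pclass_self: "a \<in> Pset G \<Longrightarrow> a \<in> pclass G a"
  unfolding pclass_def using prel_refl by blast

lemma rep_pclass: "a \<in> Pset G \<Longrightarrow> prel G a (rep (pclass G a))"
  unfolding rep_def using pclass_self by (metis mem_Collect_eq pclass_def someI)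

lemma Ptil_rep: "X \<in> Ptil G \<Longrightarrow> rep X \<in> Pset G \<and> X = pclass G (rep X)"
proof -
  assume "X \<in> Ptil G"
  then obtain a where a: "a \<in> Pset G" "X = pclass G a" unfolding Ptil_def by blast
  have "prel G a (rep X)" using rep_pclass[OF a(1)] a(2) by simp
  then show ?thesis using prel_Pset pclass_eq a(2) by blast
qed

lemma ext_simps:
  "Mor (ext G) = Inl ` Mor G \<union> Inr ` Ptil G"
  "rng (ext G) (Inl l) = Inl (rng G l)"
  "src (ext G) (Inl l) = Inl (src G l)"
  "deg (ext G) (Inl l) = deg G l"
  "cmp (ext G) (Inl l) (Inl l') = Inl (cmp G l l')"
  by (simp_all add: ext_def)

lemma ext_Inr:
  assumes "rep X = (x, m, n)"
  shows "rng (ext G) (Inr X) = (if nle m (fst x) then Inl (snd x m m) else Inr (pclass G (x, m, m)))"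
    "src (ext G) (Inr X) = Inr (pclass G (x, n, n))"
    "deg (ext G) (Inr X) = n - m"
    "cmp (ext G) (Inl l) (Inr X) = Inr (pclass G (concat G l (shift m x), 0, deg G l + n - m))"
  using assms by (simp_all add: ext_def)

lemma ext_Inr_Inr:
  assumes "rep X = (x, m, n)" "rep Y = (y, p, q)"
  shows "cmp (ext G) (Inr X) (Inr Y) = Inr (pclass G (concat G (snd x 0 (nmin n (fst x))) (shift (nmin p (fst y)) y),
                                    m, n + q - p))"
  using assms by (simp add: ext_def)

lemma deg_pclass:
  assumes "(x, m, n) \<in> Pset G"
  shows "deg (ext G) (Inr (pclass G (x, m, n))) = n - m"
proof -
  obtain y p q where r: "rep (pclass G (x, m, n)) = (y, p, q)" by (metis prod_cases3)
  have "prel G (x, m, n) (y, p, q)" using rep_pclass[OF assms] r by simp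
  then have "q - p = n - m" by (simp add: prel_iff)
  then show ?thesis using ext_Inr(3)[OF r] by simp
qed


lemma Inl_Inr_data:
  assumes l: "l \<in> Mor G" and X: "X \<in> Ptil G" and c: "src (ext G) (Inl l) = rng (ext G) (Inr X)"
  obtains z N where "cmp (ext G) (Inl l) (Inr X) = Inr (pclass G (z, 0, N))" "(z, 0, N) \<in> Pset G"
    "graph_morphism G z" "nle (deg G l) (fst z)"
proof -
  obtain x m n where r: "rep X = (x, m, n)" by (metis prod_cases3)
  have P: "boundary_path G x" "m \<le> n" "\<not> nle n (fst x)" using Ptil_rep[OF X] r by (simp_all add: Pset_iff)
  have mm: "nle m (fst x) \<and> snd x m m = src G l" using c ext_Inr(1)[OF r] ext_simps(3) by (auto split: if_splits)
  define y where "y = shift m x"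
  have bY: "boundary_path G y" using shift_boundary[OF kg P(1)] mm y_def by simp
  have gy: "graph_morphism G y" using bY unfolding boundary_path_def by simp
  have n0: "nle 0 (fst (shift m x))" by (rule nle_0)
  have y0: "snd y 0 0 = src G l" using shift_snd[OF kg order_refl n0] mm y_def by simp
  define z where "z = concat G l y"
  have bz: "boundary_path G z" using concat_boundary[OF kg l bY y0] z_def by simp
  have gz: "graph_morphism G z" using bz unfolding boundary_path_def by simp
  have fz: "fst z = (\<lambda>i. enat (deg G l i) + (fst x i - enat (m i)))"
    using concat_props(2)[OF kg l gy y0] z_def y_def by (simp add: shift_def)
  define N where "N = deg G l + n - m"
  have nN: "\<not> nle N (fst z)"
  proof
    assume a: "nle N (fst z)"
    obtain i where i: "\<not> enat (n i) \<le> fst x i" using not_nleE[OF P(3)] by blast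
    have mi: "enat (m i) \<le> fst x i" using mm unfolding nle_def by blast
    have "enat (N i) \<le> enat (deg G l i) + (fst x i - enat (m i))" using a fz unfolding nle_def by simp
    then show False using i mi N_def by (cases "fst x i") auto
  qed
  have "(z, 0, N) \<in> Pset G" using bz nN by (simp add: Pset_iff vec_zero_le)
  moreover have "cmp (ext G) (Inl l) (Inr X) = Inr (pclass G (z, 0, N))"
    using ext_Inr(4)[OF r] z_def y_def N_def by simp
  moreover have "nle (deg G l) (fst z)" using fz nle_dl by simp
  ultimately show ?thesis using that gz by blast
qed

lemma cmp_Inl_Inr_is_Inr: "\<exists>P. cmp (ext G) (Inl l) (Inr X) = Inr P"
proof -
  obtain x m n where r: "rep X = (x, m, n)" by (metis prod_cases3)
  show ?thesis using ext_Inr(4)[OF r] by blast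
qed

lemma no_Inr_Inr:
  assumes l: "l \<in> Mor G" and u: "u \<in> Mor G" and X: "X \<in> Ptil G" and Y: "Y \<in> Ptil G"
    and cX: "src (ext G) (Inl l) = rng (ext G) (Inr X)" and cY: "src (ext G) (Inl u) = rng (ext G) (Inr Y)"
    and e: "cmp (ext G) (Inl l) (Inr X) = cmp (ext G) (Inl u) (Inr Y)"
    and d: "deg (ext G) (cmp (ext G) (Inl l) (Inr X)) = sup (deg (ext G) (Inl l)) (deg (ext G) (Inl u))"
  shows False
proof -
  obtain z N where z: "cmp (ext G) (Inl l) (Inr X) = Inr (pclass G (z, 0, N))" "(z, 0, N) \<in> Pset G"
    "graph_morphism G z" "nle (deg G l) (fst z)" using Inl_Inr_data[OF l X cX] by blast
  obtain z' N' where z': "cmp (ext G) (Inl u) (Inr Y) = Inr (pclass G (z', 0, N'))" "(z', 0, N') \<in> Pset G"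
    "graph_morphism G z'" "nle (deg G u) (fst z')" using Inl_Inr_data[OF u Y cY] by blast
  define D where "D = sup (deg G l) (deg G u)"
  have ND: "N = D" using d z(1) deg_pclass[OF z(2)] D_def ext_simps(4) by simp
  have "(z', 0, N') \<in> pclass G (z, 0, N)" using e z(1) z'(1) pclass_self[OF z'(2)] by simp
  then have pr: "prel G (z, 0, N) (z', 0, N')" unfolding pclass_def by simp
  then have eq: "snd z (nmin 0 (fst z)) (nmin N (fst z)) = snd z' (nmin 0 (fst z')) (nmin N' (fst z'))" "N - 0 = N' - 0"
    unfolding prel_iff by blast+
  then have eq: "snd z 0 (nmin N (fst z)) = snd z' 0 (nmin N' (fst z'))" "N - 0 = N' - 0"
    by (simp_all add: nmin_id nle_0)
  then have eq: "snd z 0 (nmin N (fst z)) = snd z' 0 (nmin N' (fst z'))" "N = N'" by (simp_all add: vec_ar6)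
  define c where "c = nmin D (fst z)"
  define c' where "c' = nmin D (fst z')"
  have dc: "deg G (snd z 0 c) = c" using gmD(2)[OF kg z(3) vec_zero_le nmin_nle] c_def by (simp add: vec_ar6)
  have dc': "deg G (snd z' 0 c') = c'" using gmD(2)[OF kg z'(3) vec_zero_le nmin_nle] c'_def by (simp add: vec_ar6)
  have cc': "c = c'" using dc dc' eq ND c_def c'_def by metis
  have l1: "deg G l \<le> c" using nmin_ge[OF _ z(4), of D] c_def D_def by simp
  have l2: "deg G u \<le> c" using nmin_ge[OF _ z'(4), of D] c'_def D_def cc' by simp
  have "D \<le> c" using l1 l2 D_def by simp
  then have "nle D (fst z)" using nmin_id_nle c_def by blast
  moreover have "\<not> nle N (fst z)" using z(2) by (simp add: Pset_iff)
  ultimately show False using ND by simp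
qed

lemma MCE_ext_Inl:
  assumes l: "l \<in> Mor G" and u: "u \<in> Mor G"
  shows "MCE (ext G) (Inl l) (Inl u) = (\<lambda>(a, b). (Inl a, Inl b)) ` MCE G l u"
proof (intro equalityI subsetI)
  fix ab assume ab: "ab \<in> MCE (ext G) (Inl l) (Inl u)"
  obtain a b where abd: "ab = (a, b)" by (cases ab)
  have A: "a \<in> Mor (ext G)" "b \<in> Mor (ext G)" "src (ext G) (Inl l) = rng (ext G) a"
    "src (ext G) (Inl u) = rng (ext G) b" "cmp (ext G) (Inl l) a = cmp (ext G) (Inl u) b"
    "deg (ext G) (cmp (ext G) (Inl l) a) = sup (deg (ext G) (Inl l)) (deg (ext G) (Inl u))"
  proof -
    have "a \<in> Mor (ext G) \<and> b \<in> Mor (ext G) \<and> src (ext G) (Inl l) = rng (ext G) a \<and>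
    src (ext G) (Inl u) = rng (ext G) b \<and> cmp (ext G) (Inl l) a = cmp (ext G) (Inl u) b \<and>
    deg (ext G) (cmp (ext G) (Inl l) a) = sup (deg (ext G) (Inl l)) (deg (ext G) (Inl u))"
    proof -
      have H: "(a, b) \<in> MCE (ext G) (Inl l) (Inl u)" using ab abd by simp
      show ?thesis using H unfolding MCE_def by blast
    qed
    then show "a \<in> Mor (ext G)" "b \<in> Mor (ext G)" "src (ext G) (Inl l) = rng (ext G) a"
    "src (ext G) (Inl u) = rng (ext G) b" "cmp (ext G) (Inl l) a = cmp (ext G) (Inl u) b"
    "deg (ext G) (cmp (ext G) (Inl l) a) = sup (deg (ext G) (Inl l)) (deg (ext G) (Inl u))" by blast+
  qed
  show "ab \<in> (\<lambda>(a, b). (Inl a, Inl b)) ` MCE G l u"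
  proof (cases a)
    case (Inl a')
    show ?thesis
    proof (cases b)
      case (Inl b')
      have "a' \<in> Mor G" "b' \<in> Mor G" using A(1,2) Inl \<open>a = Inl a'\<close> ext_simps(1) by auto
      then have "(a', b') \<in> MCE G l u" using A Inl \<open>a = Inl a'\<close> unfolding MCE_def by (simp add: ext_simps)
      then show ?thesis using abd Inl \<open>a = Inl a'\<close> by force
    next
      case (Inr Y)
      obtain P where "cmp (ext G) (Inl u) (Inr Y) = Inr P" using cmp_Inl_Inr_is_Inr by blast
      then show ?thesis using A(5) Inr \<open>a = Inl a'\<close> by (simp add: ext_simps)
    qed
  next
    case (Inr X)
    show ?thesis
    proof (cases b)
      case (Inl b')
      obtain P where "cmp (ext G) (Inl l) (Inr X) = Inr P" using cmp_Inl_Inr_is_Inr by blast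
      then show ?thesis using A(5) Inl \<open>a = Inr X\<close> by (simp add: ext_simps)
    next
      case (Inr Y)
      have "X \<in> Ptil G" "Y \<in> Ptil G" using A(1,2) Inr \<open>a = Inr X\<close> ext_simps(1) by auto
      then show ?thesis using no_Inr_Inr[OF l u] A Inr \<open>a = Inr X\<close> by blast
    qed
  qed
next
  fix ab :: "('m + ('m,'k) ptriple set) \<times> ('m + ('m,'k) ptriple set)"
  assume "ab \<in> (\<lambda>(a, b). (Inl a, Inl b)) ` MCE G l u"
  then obtain a b where ab: "ab = (Inl a, Inl b)" "(a, b) \<in> MCE G l u" by auto
  then show "ab \<in> MCE (ext G) (Inl l) (Inl u)" unfolding MCE_def by (auto simp: ext_simps)
qed

end


definition nm :: "nat \<Rightarrow> enat \<Rightarrow> nat" where "nm p M = (if enat p \<le> M then p else the_enat M)"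

lemma nmin_nm: "nmin p m i = nm (p i) (m i)" by (simp add: nmin_def nm_def)

lemma coord_key:
  assumes "n \<le> N" "p3 \<le> q3" "N - n = q3 - p3" "n - nm n X = p3 - nm p3 Y"
    "nm N X - nm n X = nm q3 Y - nm p3 Y"
  shows "nm N (enat (nm n X) + (Y - enat (nm p3 Y))) = nm N X"
  using assms unfolding nm_def by (cases X; cases Y) (auto split: if_splits)

lemma vec_key:
  assumes "n \<le> N" "p3 \<le> q3" "N - n = q3 - p3" "n - nmin n X = p3 - nmin p3 Y"
    "nmin N X - nmin n X = nmin q3 Y - nmin p3 Y"
  shows "nmin N (\<lambda>i. enat (nmin n X i) + (Y i - enat (nmin p3 Y i))) = nmin N X"
proof
  fix i
  have h: "n i \<le> N i" "p3 i \<le> q3 i" "N i - n i = q3 i - p3 i" "n i - nm (n i) (X i) = p3 i - nm (p3 i) (Y i)"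
    "nm (N i) (X i) - nm (n i) (X i) = nm (q3 i) (Y i) - nm (p3 i) (Y i)"
    using le_funD[OF assms(1), of i] le_funD[OF assms(2), of i] apply simp_all
    using fun_cong[OF assms(3), of i] fun_cong[OF assms(4), of i] fun_cong[OF assms(5), of i]
    by (simp_all add: nmin_nm)
  show "nmin N (\<lambda>i. enat (nmin n X i) + (Y i - enat (nmin p3 Y i))) i = nmin N X i"
    unfolding nmin_nm using coord_key[OF h] by simp
qed

lemma vec_key2:
  assumes "m2 \<le> n2" "nle m2 X"
  shows "nmin (d + n2 - m2) (\<lambda>i. enat (d i) + (X i - enat (m2 i))) = d + (nmin n2 X - m2)"
proof
  fix i
  have h1: "m2 i \<le> n2 i" using le_funD[OF assms(1), of i] .
  have h2: "enat (m2 i) \<le> X i" using assms(2) unfolding nle_def by blast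
  note h = h1 h2
  show "nmin (d + n2 - m2) (\<lambda>i. enat (d i) + (X i - enat (m2 i))) i = (d + (nmin n2 X - m2)) i"
    unfolding nmin_nm nm_def using h by (cases "X i") auto
qed

lemma vec_key3:
  assumes "\<not> nle n2 X" "nle m2 X"
  shows "\<not> nle (d + n2 - m2) (\<lambda>i. enat (d i) + (X i - enat (m2 i)))"
proof
  assume a: "nle (d + n2 - m2) (\<lambda>i. enat (d i) + (X i - enat (m2 i)))"
  obtain i where i: "\<not> enat (n2 i) \<le> X i" using not_nleE[OF assms(1)] by blast
  have m: "enat (m2 i) \<le> X i" using assms(2) unfolding nle_def by blast
  have "enat ((d + n2 - m2) i) \<le> enat (d i) + (X i - enat (m2 i))" using a unfolding nle_def by blast
  then show False using i m by (cases "X i") auto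
qed

lemma vec_key4: "(m::'k\<Rightarrow>nat) \<le> n \<Longrightarrow> sup n (d + m) - m = sup d (n - m)"
  by (auto simp: fun_eq_iff le_fun_def sup_max max_def)

lemma vec_key5:
  assumes "(m2::'k\<Rightarrow>nat) \<le> n2" "d + m \<le> N" "N - (d + m) = n2 - m2" shows "d + n2 - m2 = N - m"
proof
  fix x
  have "m2 x \<le> n2 x" "d x + m x \<le> N x" using le_funD[OF assms(1)] le_funD[OF assms(2)] by auto
  moreover have "N x - (d x + m x) = n2 x - m2 x" using fun_cong[OF assms(3), of x] by simp
  ultimately show "(d + n2 - m2) x = (N - m) x" by simp
qed

lemma vec_key6:
  assumes "(p3::'k\<Rightarrow>nat) \<le> q3" "n \<le> N" "N - n = q3 - p3" shows "n + q3 - p3 = N"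
proof
  fix x
  have "p3 x \<le> q3 x" "n x \<le> N x" using le_funD[OF assms(1)] le_funD[OF assms(2)] by auto
  moreover have "N x - n x = q3 x - p3 x" using fun_cong[OF assms(3), of x] by simp
  ultimately show "(n + q3 - p3) x = N x" by simp
qed

lemma vec_basis: assumes "(m::'k\<Rightarrow>nat) i < e i" shows "basis i \<le> e - m"
  unfolding le_fun_def basis_def using assms by auto

lemma vec_not_le: "\<not> (a::'k\<Rightarrow>nat) \<le> b \<Longrightarrow> \<exists>i. b i < a i"
  unfolding le_fun_def by (simp add: not_le)

context fixes G :: "('m,'k::finite) kgraph" assumes kg: "kgraph G"
begin

lemma boundary_exhaust:
  assumes x: "boundary_path G x" and E: "finite E" "exhaustive G v E" and v0: "snd x 0 0 = v"
  shows "\<exists>l\<in>E. nle (deg G l) (fst x) \<and> snd x 0 (deg G l) = l"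
proof -
  have gx: "graph_morphism G x" using x unfolding boundary_path_def by simp
  obtain nx where nx: "nle nx (fst x)" "\<forall>p i. nx \<le> p \<and> nle p (fst x) \<and> enat (p i) = fst x i \<longrightarrow>
           \<not> (\<exists>l\<in>Mor G. rng G l = snd x p p \<and> deg G l = basis i)"
    using x unfolding boundary_path_def by blast
  have Ev: "E \<subseteq> vMor G v" and Ex: "\<forall>u\<in>vMor G v. \<exists>l\<in>E. MCE G l u \<noteq> {}"
    using E(2) unfolding exhaustive_def by blast+
  define K where "K = (\<lambda>i. nx i + (\<Sum>l\<in>E. deg G l i))"
  have KE: "deg G l \<le> K" if "l \<in> E" for l
    unfolding le_fun_def K_def
  proof
    fix i have "deg G l i \<le> (\<Sum>l\<in>E. deg G l i)" using member_le_sum[OF that _ E(1), of "\<lambda>l. deg G l i"] by simp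
    then show "deg G l i \<le> nx i + (\<Sum>l\<in>E. deg G l i)" by simp
  qed
  have Knx: "nx \<le> K" unfolding le_fun_def K_def by simp
  define m where "m = nmin K (fst x)"
  have nm: "nle m (fst x)" using nmin_nle m_def by simp
  have nxm: "nx \<le> m" using nmin_ge[OF Knx nx(1)] m_def by simp
  define mu where "mu = snd x 0 m"
  note gm = gmD[OF kg gx vec_zero_le nm]
  have mu: "mu \<in> Mor G" "deg G mu = m" "rng G mu = v" "src G mu = snd x m m"
    using gm v0 mu_def by (simp_all add: vec_ar6)
  then have "mu \<in> vMor G v" unfolding vMor_def by simp
  then obtain l where l: "l \<in> E" "MCE G l mu \<noteq> {}" using Ex by blast
  then obtain a b where ab: "(a, b) \<in> MCE G l mu" by auto
  have lM: "l \<in> Mor G" "rng G l = v" using Ev l(1) unfolding vMor_def by auto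
  have A: "a \<in> Mor G" "b \<in> Mor G" "src G l = rng G a" "src G mu = rng G b"
    "cmp G l a = cmp G mu b" "deg G (cmp G l a) = sup (deg G l) (deg G mu)"
    using ab unfolding MCE_def by blast+
  have dmb: "m + deg G b = sup (deg G l) m"
    using kg_cmp(4)[OF kg mu(1) A(2) A(4)] A(5,6) mu(2) by simp
  have dl: "deg G l \<le> m"
  proof (rule ccontr)
    assume "\<not> deg G l \<le> m"
    then obtain i where i: "m i < deg G l i" using vec_not_le by blast
    have Ki: "deg G l i \<le> K i" using le_funD[OF KE[OF l(1)]] by blast
    have mi: "enat (m i) = fst x i"
    proof (cases "enat (K i) \<le> fst x i")
      case True
      then have "m i = K i" unfolding m_def nmin_def by simp
      then show ?thesis using i Ki by simp
    next
      case False
      then show ?thesis unfolding m_def nmin_def by (cases "fst x i") auto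
    qed
    have db: "deg G b = sup (deg G l) m - m" using dmb by (metis add_diff_cancel_left')
    have bi: "basis i \<le> deg G b"
    proof -
      have "m i < sup (deg G l) m i" using i by (simp add: sup_max)
      then show ?thesis using vec_basis[of m i "sup (deg G l) m"] db by simp
    qed
    have "deg G b = basis i + (deg G b - basis i)" using vec_add_diff[OF bi] by simp
    from fact_ex[OF kg A(2) this] obtain e r where er: "e \<in> Mor G" "r \<in> Mor G" "src G e = rng G r"
      "deg G e = basis i" "cmp G e r = b" by blast
    have "rng G e = rng G b" using kg_cmp(2)[OF kg er(1,2,3)] er(5) by simp
    then have "rng G e = snd x m m" using A(4) mu(4) by simp
    then show False using nx(2)[rule_format, OF conjI[OF nxm conjI[OF nm mi]]] er(1,4) by blast
  qed
  have nl: "nle (deg G l) (fst x)" using nle_mono[OF dl nm] .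
  have sm: "sup (deg G l) m = m" using dl by (simp add: sup_absorb2)
  have db0: "deg G b = 0" using dmb sm by (metis add_cancel_right_right)
  have bsrc: "b = src G mu" using deg0_rng[OF kg A(2) db0] A(4) by simp
  have e1: "cmp G l a = mu" using A(5) bsrc kgD(8)[OF kg mu(1)] by simp
  have da: "deg G a = m - deg G l"
    using kg_cmp(4)[OF kg lM(1) A(1) A(3)] e1 mu(2) by (metis add_diff_cancel_left')
  note g1 = gmD[OF kg gx vec_zero_le nl]
  note g2 = gmD[OF kg gx dl nm]
  have e2: "mu = cmp G (snd x 0 (deg G l)) (snd x (deg G l) m)"
    using gm_cmp[OF kg gx vec_zero_le dl nm] mu_def by simp
  have "l = snd x 0 (deg G l) \<and> a = snd x (deg G l) m"
    apply (rule fact_uniq[OF kg lM(1) A(1) A(3) g1(1) g2(1)])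
    using g1 g2 da e1 e2 by (simp_all add: vec_ar6)
  then show ?thesis using l(1) nl by auto
qed

lemma Inr_witness:
  assumes X: "X \<in> Ptil G" and rX: "rng (ext G) (Inr X) = Inl v" and E: "finite E" "exhaustive G v E"
  shows "\<exists>l\<in>E. MCE (ext G) (Inl l) (Inr X) \<noteq> {}"
proof -
  note PI = Pset_iff[OF kg] and PR = prel_iff[OF kg]
  obtain x m n where r: "rep X = (x, m, n)" by (metis prod_cases3)
  have P: "boundary_path G x" "m \<le> n" "\<not> nle n (fst x)" using Ptil_rep[OF kg X] r by (simp_all add: PI)
  have gx: "graph_morphism G x" using P(1) unfolding boundary_path_def by simp
  have mm: "nle m (fst x)" "snd x m m = v" using rX ext_Inr(1)[OF kg r] by (auto split: if_splits)
  define x' where "x' = shift m x"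
  have bx': "boundary_path G x'" using shift_boundary[OF kg P(1) mm(1)] x'_def by simp
  have n00: "nle 0 (fst (shift m x))" by (rule nle_0)
  have x'0: "snd x' 0 0 = v" using shift_snd[OF kg order_refl n00] mm x'_def by simp
  obtain l where l: "l \<in> E" "nle (deg G l) (fst x')" "snd x' 0 (deg G l) = l"
    using boundary_exhaust[OF bx' E x'0] by blast
  have lM: "l \<in> Mor G" using l(1) E(2) unfolding exhaustive_def vMor_def by blast
  define d where "d = deg G l"
  define A where "A = d + m"
  have fx': "fst x' = (\<lambda>i. fst x i - enat (m i))" using x'_def by (simp add: shift_def)
  have nA: "nle A (fst x)" using l(2) nle_shift_iff[OF mm(1), of d] fx' A_def d_def by simp
  have lA: "l = snd x m A"
    using shift_snd[OF kg vec_zero_le, of d m x] l(2,3) x'_def A_def d_def by simp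
  have mA: "m \<le> A" unfolding A_def by (rule vec_le_add2)
  define N where "N = sup n A"
  have nN: "n \<le> N" "A \<le> N" unfolding N_def by simp_all
  have nNx: "\<not> nle N (fst x)" using not_nle_mono[OF nN(1) P(3)] .
  have T1: "(x, A, N) \<in> Pset G" using P(1) nN(2) nNx by (simp add: PI)
  have T2: "(x, n, N) \<in> Pset G" using P(1) nN(1) nNx by (simp add: PI)
  define \<alpha> :: "'m + ('m,'k) ptriple set" where "\<alpha> = Inr (pclass G (x, A, N))"
  define \<beta> :: "'m + ('m,'k) ptriple set" where "\<beta> = Inr (pclass G (x, n, N))"
  have aM: "\<alpha> \<in> Mor (ext G)" "\<beta> \<in> Mor (ext G)" using T1 T2 \<alpha>_def \<beta>_def
    by (auto simp: ext_simps[OF kg] Ptil_def)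
  obtain x2 m2 n2 where r2: "rep (pclass G (x, A, N)) = (x2, m2, n2)" by (metis prod_cases3)
  obtain y3 p3 q3 where r3: "rep (pclass G (x, n, N)) = (y3, p3, q3)" by (metis prod_cases3)
  have pr2: "prel G (x, A, N) (x2, m2, n2)" using rep_pclass[OF kg T1] r2 by simp
  have pr3: "prel G (x, n, N) (y3, p3, q3)" using rep_pclass[OF kg T2] r3 by simp
  have P2: "boundary_path G x2" "m2 \<le> n2" "\<not> nle n2 (fst x2)" using pr2 by (simp_all add: PR PI)
  have S2: "snd x (nmin A (fst x)) (nmin N (fst x)) = snd x2 (nmin m2 (fst x2)) (nmin n2 (fst x2))"
    and O2: "A - nmin A (fst x) = m2 - nmin m2 (fst x2)" and LL2: "N - A = n2 - m2"
    using pr2 unfolding PR by blast+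
  have P3: "boundary_path G y3" "p3 \<le> q3" "\<not> nle q3 (fst y3)" using pr3 by (simp_all add: PR PI)
  have S3: "snd x (nmin n (fst x)) (nmin N (fst x)) = snd y3 (nmin p3 (fst y3)) (nmin q3 (fst y3))"
    and O3: "n - nmin n (fst x) = p3 - nmin p3 (fst y3)" and L3: "N - n = q3 - p3"
    using pr3 unfolding PR by blast+
  have gx2: "graph_morphism G x2" using P2(1) unfolding boundary_path_def by simp
  have gy3: "graph_morphism G y3" using P3(1) unfolding boundary_path_def by simp
  have nAA: "nmin A (fst x) = A" using nmin_id[OF nA] .
  have nm2: "nle m2 (fst x2)" using O2 nAA nmin_sub0[of m2 "fst x2"] by (simp add: vec_ar6)
  have nm2': "nmin m2 (fst x2) = m2" using nmin_id[OF nm2] .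
  define cN where "cN = nmin N (fst x)"
  define c where "c = nmin n (fst x)"
  define c3 where "c3 = nmin p3 (fst y3)"
  define cq where "cq = nmin q3 (fst y3)"
  define c2 where "c2 = nmin n2 (fst x2)"
  have S2': "snd x A cN = snd x2 m2 c2" using S2 nAA nm2' cN_def c2_def by simp
  have S3': "snd x c cN = snd y3 c3 cq" using S3 c_def cN_def c3_def cq_def by simp
  have ncN: "nle cN (fst x)" "nle c (fst x)" "nle c3 (fst y3)" "nle cq (fst y3)" "nle c2 (fst x2)"
    using nmin_nle cN_def c_def c3_def cq_def c2_def by simp_all
  have ccN: "c \<le> cN" using nmin_mono[OF nN(1)] c_def cN_def by simp
  have AcN: "A \<le> cN" using nmin_ge[OF nN(2) nA] cN_def by simp
  have mc: "m \<le> c" using nmin_ge[OF P(2) mm(1)] c_def by simp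
  have c3cq: "c3 \<le> cq" using nmin_mono[OF P3(2)] c3_def cq_def by simp
  have m2c2: "m2 \<le> c2" using nmin_ge[OF P2(2) nm2] c2_def by simp
  note gA = gmD[OF kg gx AcN ncN(1)]
  note g2 = gmD[OF kg gx2 m2c2 ncN(5)]
  note gc = gmD[OF kg gx ccN ncN(1)]
  note g3 = gmD[OF kg gy3 c3cq ncN(4)]
  note gmA = gmD[OF kg gx mA nA]
  have i1: "src (ext G) (Inl l) = rng (ext G) \<alpha>"
  proof -
    have "rng (ext G) \<alpha> = Inl (snd x2 m2 m2)" using ext_Inr(1)[OF kg r2] nm2 \<alpha>_def by simp
    moreover have "snd x2 m2 m2 = snd x A A" using g2(3) gA(3) S2' by simp
    moreover have "src G l = snd x A A" using gmA(4) lA by simp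
    ultimately show ?thesis by (simp add: ext_simps[OF kg])
  qed
  have np3: "\<not> nle p3 (fst y3)"
  proof
    assume "nle p3 (fst y3)"
    then have "p3 - nmin p3 (fst y3) = 0" using nmin_sub0 by blast
    then have "n - nmin n (fst x) = 0" using O3 by simp
    then have "nle n (fst x)" using nmin_sub0[of n "fst x"] by blast
    then show False using P(3) by simp
  qed
  have src_eq: "snd y3 c3 c3 = snd x c c" using g3(3) gc(3) S3' by simp
  have i2: "src (ext G) (Inr X) = rng (ext G) \<beta>"
  proof -
    have "rng (ext G) \<beta> = Inr (pclass G (y3, p3, p3))" using ext_Inr(1)[OF kg r3] np3 \<beta>_def by simp
    moreover have "prel G (x, n, n) (y3, p3, p3)"
      unfolding PR using P P3 np3 O3 src_eq c_def c3_def by (simp add: PI vec_ar6)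
    ultimately show ?thesis using ext_Inr(2)[OF kg r] pclass_eq[OF kg] by simp
  qed
  define y1 where "y1 = shift m2 x2"
  define z1 where "z1 = concat G l y1"
  define L1 where "L1 = d + n2 - m2"
  have by1: "boundary_path G y1" using shift_boundary[OF kg P2(1) nm2] y1_def by simp
  have gy1: "graph_morphism G y1" using by1 unfolding boundary_path_def by simp
  have n0b: "nle 0 (fst (shift m2 x2))" by (rule nle_0)
  have y10: "snd y1 0 0 = src G l" using shift_snd[OF kg order_refl n0b] i1 y1_def
    ext_Inr(1)[OF kg r2] nm2 \<alpha>_def by (simp add: ext_simps[OF kg])
  have bz1: "boundary_path G z1" using concat_boundary[OF kg lM by1 y10] z1_def by simp
  have fz1: "fst z1 = (\<lambda>i. enat (d i) + (fst x2 i - enat (m2 i)))"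
    using concat_props(2)[OF kg lM gy1 y10] z1_def y1_def d_def by (simp add: shift_def)
  have Z1: "(z1, 0, L1) \<in> Pset G" using bz1 vec_key3[OF P2(3) nm2, of d] fz1 L1_def
    by (simp add: PI vec_zero_le)
  have c1: "cmp (ext G) (Inl l) \<alpha> = Inr (pclass G (z1, 0, L1))"
    using ext_Inr(4)[OF kg r2] \<alpha>_def z1_def y1_def L1_def d_def by simp
  define w0 where "w0 = snd x 0 c"
  note g0 = gmD[OF kg gx vec_zero_le ncN(2)]
  define y2 where "y2 = shift c3 y3"
  define z2 where "z2 = concat G w0 y2"
  have w0: "w0 \<in> Mor G" "deg G w0 = c" "src G w0 = snd x c c" using g0 w0_def by (simp_all add: vec_ar6)
  have by2: "boundary_path G y2" using shift_boundary[OF kg P3(1) ncN(3)] y2_def by simp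
  have gy2: "graph_morphism G y2" using by2 unfolding boundary_path_def by simp
  have n0c: "nle 0 (fst (shift c3 y3))" by (rule nle_0)
  have y20: "snd y2 0 0 = src G w0" using shift_snd[OF kg order_refl n0c] src_eq w0 y2_def by simp
  have bz2: "boundary_path G z2" using concat_boundary[OF kg w0(1) by2 y20] z2_def by simp
  have gz2: "graph_morphism G z2" using bz2 unfolding boundary_path_def by simp
  have fz2: "fst z2 = (\<lambda>i. enat (c i) + (fst y3 i - enat (c3 i)))"
    using concat_props(2)[OF kg w0(1) gy2 y20] z2_def y2_def w0(2) by (simp add: shift_def)
  have L2: "n + q3 - p3 = N" using vec_key6[OF P3(2) nN(1) L3] .
  have c2': "cmp (ext G) (Inr X) \<beta> = Inr (pclass G (z2, m, N))"
    using ext_Inr_Inr[OF kg r r3] \<beta>_def z2_def y2_def w0_def c_def c3_def L2 by simp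
  have D3: "cN - c = cq - c3" using gc(2) g3(2) S3' by simp
  have key: "nmin N (fst z2) = cN"
    using vec_key[OF nN(1) P3(2) L3 O3] D3 fz2 c_def cN_def c3_def cq_def by simp
  have Z2: "(z2, m, N) \<in> Pset G"
  proof -
    have "\<not> nle N (fst z2)"
    proof
      assume "nle N (fst z2)"
      then have "nmin N (fst z2) = N" by (rule nmin_id)
      then have "N = cN" using key by simp
      then have "nle N (fst x)" using ncN(1) by simp
      then show False using nNx by simp
    qed
    moreover have "m \<le> N" using order_trans[OF P(2) nN(1)] .
    ultimately show ?thesis using bz2 by (simp add: PI)
  qed
  have ncz: "nle c (fst z2)" using fz2 nle_dl by simp
  have nmz: "nle m (fst z2)" using nle_mono[OF mc ncz] .
  have ncNz: "nle cN (fst z2)" using key nmin_nle by metis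
  define Q1 where "Q1 = c2 - m2"
  have key2: "nmin L1 (fst z1) = d + Q1"
    using vec_key2[OF P2(2) nm2, of d] fz1 L1_def Q1_def c2_def by simp
  have Q1m2: "Q1 + m2 = c2" using vec_sub_add[OF m2c2] Q1_def by simp
  have nQ1: "nle Q1 (fst y1)"
  proof -
    have "fst y1 = (\<lambda>i. fst x2 i - enat (m2 i))" using y1_def by (simp add: shift_def)
    then show ?thesis using nle_shift_iff[OF nm2, of Q1] Q1m2 ncN(5) by simp
  qed
  have seg1: "snd z1 0 (nmin L1 (fst z1)) = snd x m cN"
  proof -
    have "snd z1 0 (nmin L1 (fst z1)) = cmp G l (snd y1 0 Q1)"
      using concat_0Q[OF kg lM gy1 y10 nQ1] key2 z1_def d_def by simp
    moreover have "snd y1 0 Q1 = snd x2 m2 c2"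
      using shift_snd[OF kg vec_zero_le, of Q1 m2 x2] nQ1 y1_def Q1m2 by simp
    moreover have "cmp G (snd x m A) (snd x A cN) = snd x m cN" using gm_cmp[OF kg gx mA AcN ncN(1)] .
    ultimately show ?thesis using S2' lA by simp
  qed
  have seg2: "snd z2 m cN = snd x m cN"
  proof -
    have mcN: "m \<le> cN" using order_trans[OF mc ccN] .
    have s1: "snd z2 m cN = seg G (snd z2 0 cN) m cN"
      using gm_seg[OF kg gz2 vec_zero_le mcN order_refl ncNz] by (simp add: vec_ar6)
    have ncq: "nle (cN - c) (fst y2)"
    proof -
      have "fst y2 = (\<lambda>i. fst y3 i - enat (c3 i))" using y2_def by (simp add: shift_def)
      then show ?thesis using nle_shift_iff[OF ncN(3), of "cN - c"] D3 vec_sub_add[OF c3cq] ncN(4) by simp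
    qed
    have s2: "snd z2 0 (c + (cN - c)) = cmp G w0 (snd y2 0 (cN - c))"
      using concat_0Q[OF kg w0(1) gy2 y20 ncq] z2_def w0(2) by simp
    have s3: "c + (cN - c) = cN" using vec_add_diff[OF ccN] .
    have s4: "snd y2 0 (cN - c) = snd y3 c3 cq"
      using shift_snd[OF kg vec_zero_le ncq[unfolded y2_def]] D3 vec_sub_add[OF c3cq] y2_def by simp
    have s5: "cmp G w0 (snd x c cN) = snd x 0 cN" using gm_cmp[OF kg gx vec_zero_le ccN ncN(1)] w0_def by simp
    have s6: "seg G (snd x 0 cN) m cN = snd x m cN"
      using gm_seg[OF kg gx vec_zero_le mcN order_refl ncN(1)] by (simp add: vec_ar6)
    show ?thesis using s1 s2 s3 s4 s5 s6 S3' by simp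
  qed
  have L1N: "L1 = N - m" using vec_key5[OF P2(2) nN(2)[unfolded A_def] LL2[unfolded A_def]] L1_def by simp
  have prz: "prel G (z1, 0, L1) (z2, m, N)"
    unfolding PR using Z1 Z2 seg1 seg2 key nmin_id[OF nmz] nmin_id[OF nle_0, of "fst z1"] L1N
    by (simp add: vec_ar6)
  have ceq: "cmp (ext G) (Inl l) \<alpha> = cmp (ext G) (Inr X) \<beta>"
    using c1 c2' pclass_eq[OF kg prz] by simp
  have dg: "deg (ext G) (cmp (ext G) (Inl l) \<alpha>) = sup (deg (ext G) (Inl l)) (deg (ext G) (Inr X))"
  proof -
    have "deg (ext G) (cmp (ext G) (Inl l) \<alpha>) = L1 - 0" using c1 deg_pclass[OF kg Z1] by simp
    also have "\<dots> = N - m" using L1N by (simp add: vec_ar6)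
    also have "\<dots> = sup d (n - m)" using vec_key4[OF P(2), of d] N_def A_def by simp
    finally show ?thesis using ext_Inr(3)[OF kg r] d_def by (simp add: ext_simps[OF kg])
  qed
  have "(\<alpha>, \<beta>) \<in> MCE (ext G) (Inl l) (Inr X)"
    unfolding MCE_def using aM i1 i2 ceq dg by simp
  then show ?thesis using l(1) by blast
qed

end



theorem theorem3p28:
  fixes G :: "('m, 'k::finite) kgraph"
    and t :: "'m + ('m, 'k) ptriple set \<Rightarrow> 'a::cstar_algebra"
  assumes "kgraph G"
    and "finitely_aligned G"
    and "CK_family (ext G) t"
  shows "CK_family G (t \<circ> Inl)"
proof -
  note kg = assms(1)
  note H = assms(3)[unfolded CK_family_def]
  have H1: "\<forall>l\<in>Mor (ext G). partial_isometry (t l)" using H by (rule conjunct1)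
  have H2: "\<forall>v\<in>verts (ext G). adj (t v) = t v \<and> t v * t v = t v" using H[THEN conjunct2] by (rule conjunct1)
  have H3: "\<forall>v\<in>verts (ext G). \<forall>w\<in>verts (ext G). v \<noteq> w \<longrightarrow> t v * t w = 0" using H[THEN conjunct2, THEN conjunct2] by (rule conjunct1)
  have H4: "\<forall>l\<in>Mor (ext G). \<forall>u\<in>Mor (ext G). src (ext G) l = rng (ext G) u \<longrightarrow>
      t (cmp (ext G) l u) = t l * t u" using H[THEN conjunct2, THEN conjunct2, THEN conjunct2] by (rule conjunct1)
  have H5: "\<forall>l\<in>Mor (ext G). \<forall>u\<in>Mor (ext G). adj (t l) * t u = (\<Sum>(a, b)\<in>MCE (ext G) l u. t a * adj (t b))"
    using H[THEN conjunct2, THEN conjunct2, THEN conjunct2, THEN conjunct2] by (rule conjunct1)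
  have H6: "\<forall>v\<in>verts (ext G). \<forall>E\<in>vFE (ext G) v. \<forall>xs. distinct xs \<and> set xs = E \<longrightarrow>
        nprod (map (\<lambda>l. t v - t l * adj (t l)) xs) = 0" using H[THEN conjunct2, THEN conjunct2, THEN conjunct2, THEN conjunct2] by (rule conjunct2)
  note es = ext_simps[OF kg]
  have IM: "Inl l \<in> Mor (ext G)" if "l \<in> Mor G" for l using that es(1) by simp
  have IV: "Inl v \<in> verts (ext G)" if vv: "v \<in> verts G" for v
  proof -
    obtain l where l: "l \<in> Mor G" "v = rng G l" using vv unfolding verts_def by blast
    then have "Inl v = rng (ext G) (Inl l)" using es(2) by simp
    then show ?thesis unfolding verts_def using IM[OF l(1)] by blast
  qed
  show ?thesis
    unfolding CK_family_def
  proof (intro conjI ballI allI impI)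
    fix l assume "l \<in> Mor G"
    then show "partial_isometry ((t \<circ> Inl) l)" using H1 IM by simp
  next
    fix v assume "v \<in> verts G"
    then show "adj ((t \<circ> Inl) v) = (t \<circ> Inl) v" "(t \<circ> Inl) v * (t \<circ> Inl) v = (t \<circ> Inl) v"
      using H2 IV by simp_all
  next
    fix v w assume "v \<in> verts G" "w \<in> verts G" "v \<noteq> w"
    then show "(t \<circ> Inl) v * (t \<circ> Inl) w = 0" using H3 IV by simp
  next
    fix l u assume lu: "l \<in> Mor G" "u \<in> Mor G" "src G l = rng G u"
    have "src (ext G) (Inl l) = rng (ext G) (Inl u)" using lu(3) es(2,3) by simp
    then have "t (cmp (ext G) (Inl l) (Inl u)) = t (Inl l) * t (Inl u)" using H4 IM[OF lu(1)] IM[OF lu(2)] by blast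
    then show "(t \<circ> Inl) (cmp G l u) = (t \<circ> Inl) l * (t \<circ> Inl) u" using es(5) by simp
  next
    fix l u assume lu: "l \<in> Mor G" "u \<in> Mor G"
    have "adj ((t \<circ> Inl) l) * (t \<circ> Inl) u = (\<Sum>(a, b)\<in>MCE (ext G) (Inl l) (Inl u). t a * adj (t b))"
      using H5 IM lu by simp
    also have "\<dots> = (\<Sum>(a, b)\<in>(\<lambda>(a, b). (Inl a, Inl b)) ` MCE G l u. t a * adj (t b))"
      using MCE_ext_Inl[OF kg lu] by simp
    also have "\<dots> = (\<Sum>(a, b)\<in>MCE G l u. (t \<circ> Inl) a * adj ((t \<circ> Inl) b))"
    proof (subst sum.reindex)
      show "inj_on (\<lambda>(a, b). (Inl a, Inl b)) (MCE G l u)" by (auto simp: inj_on_def)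
      show "sum ((\<lambda>(a, b). t a * adj (t b)) \<circ> (\<lambda>(a, b). (Inl a, Inl b))) (MCE G l u) =
          (\<Sum>(a, b)\<in>MCE G l u. (t \<circ> Inl) a * adj ((t \<circ> Inl) b))"
        by (rule sum.cong) auto
    qed
    finally show "adj ((t \<circ> Inl) l) * (t \<circ> Inl) u = (\<Sum>(a, b)\<in>MCE G l u. (t \<circ> Inl) a * adj ((t \<circ> Inl) b))" .
  next
    fix v E xs assume v: "v \<in> verts G" and E: "E \<in> vFE G v" and xs: "distinct xs \<and> set xs = E"
    have Ef: "finite E" and Ex: "exhaustive G v E" using E unfolding vFE_def by auto
    have Ev: "E \<subseteq> vMor G v" and Ex2: "\<forall>u\<in>vMor G v. \<exists>l\<in>E. MCE G l u \<noteq> {}"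
      using Ex unfolding exhaustive_def by blast+
    have "exhaustive (ext G) (Inl v) (Inl ` E)"
      unfolding exhaustive_def
    proof (intro conjI ballI)
      show "Inl ` E \<subseteq> vMor (ext G) (Inl v)"
        using Ev IM es(2) unfolding vMor_def by auto
    next
      fix mu assume mu: "mu \<in> vMor (ext G) (Inl v)"
      then have muM: "mu \<in> Mor (ext G)" and rmu: "rng (ext G) mu = Inl v" unfolding vMor_def by auto
      show "\<exists>l\<in>Inl ` E. MCE (ext G) l mu \<noteq> {}"
      proof (cases mu)
        case (Inl u)
        then have uM: "u \<in> Mor G" using muM es(1) by auto
        then have "u \<in> vMor G v" using rmu Inl es(2) unfolding vMor_def by simp
        then obtain l where l: "l \<in> E" "MCE G l u \<noteq> {}" using Ex2 by blast
        have lM: "l \<in> Mor G" using l(1) Ev unfolding vMor_def by auto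
        have "MCE (ext G) (Inl l) (Inl u) \<noteq> {}" using MCE_ext_Inl[OF kg lM uM] l(2) by simp
        then show ?thesis using l(1) Inl by blast
      next
        case (Inr X)
        then have XP: "X \<in> Ptil G" using muM es(1) by auto
        obtain l where "l \<in> E" "MCE (ext G) (Inl l) (Inr X) \<noteq> {}"
          using Inr_witness[OF kg XP _ Ef Ex] rmu Inr by blast
        then show ?thesis using Inr by blast
      qed
    qed
    then have E': "Inl ` E \<in> vFE (ext G) (Inl v)" using Ef unfolding vFE_def by simp
    have xs': "distinct (map Inl xs) \<and> set (map Inl xs) = Inl ` E"
      using xs by (simp add: distinct_map)
    have "nprod (map (\<lambda>l. t (Inl v) - t l * adj (t l)) (map Inl xs)) = 0"
      by (rule H6[rule_format, OF IV[OF v] E' xs'])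
    then show "nprod (map (\<lambda>l. (t \<circ> Inl) v - (t \<circ> Inl) l * adj ((t \<circ> Inl) l)) xs) = 0"
      by (simp add: comp_def)
  qed
qed



end
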